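(* Let $n=1$, $\Omega=(0,3)$, $\mu=\chi_{(1,2)}$, $c=\chi_{(2,3)}$, $h=0$, and consider for $\lambda\in\mathbb{R}$ the problem $-u''=\mu(x)|u'|^2+\lambda c(x)u$ in $(0,3)$, $u\in H^1_0(0,3)\cap L^\infty(0,3)$ (in the weak sense with test functions in $H^1_0(0,3)\cap L^\infty(0,3)$). There exist a sequence $\lambda_j\to\pi^2/4$ and a sequence $u_j\in H^2(0,3)\cap H^1_0(0,3)$ such that each $u_j$ is a solution of this problem with $\lambda=\lambda_j$ and $\|u_j\|_\infty\to\infty$ as $j\to\infty$.
   Context: $\chi_A$ denotes the indicator function of the set $A$. *)

theory Defs
  imports "HOL-Analysis.Analysis" "HOL-Probability.Essential_Supremum"
begin

definition intv :: "real \<Rightarrow> real \<Rightarrow> real measure" where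
  "intv a b = restrict_space lborel {a<..<b}"

definition test_fun :: "real \<Rightarrow> real \<Rightarrow> (real \<Rightarrow> real) \<Rightarrow> bool" where
  "test_fun a b \<phi> \<longleftrightarrow>
     (\<forall>k x. (deriv ^^ k) \<phi> differentiable (at x)) \<and>
     (\<exists>K. compact K \<and> K \<subseteq> {a<..<b} \<and> (\<forall>x. x \<notin> K \<longrightarrow> \<phi> x = 0))"

definition L2 :: "real \<Rightarrow> real \<Rightarrow> (real \<Rightarrow> real) \<Rightarrow> bool" where
  "L2 a b f \<longleftrightarrow> f \<in> borel_measurable (intv a b) \<and> integrable (intv a b) (\<lambda>x. (f x)\<^sup>2)"

definition Linf_norm :: "real \<Rightarrow> real \<Rightarrow> (real \<Rightarrow> real) \<Rightarrow> ereal" where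
  "Linf_norm a b f = esssup (intv a b) (\<lambda>x. ereal \<bar>f x\<bar>)"

definition Linf :: "real \<Rightarrow> real \<Rightarrow> (real \<Rightarrow> real) \<Rightarrow> bool" where
  "Linf a b f \<longleftrightarrow> f \<in> borel_measurable (intv a b) \<and> Linf_norm a b f < \<infinity>"

text \<open>g is a weak derivative of u on (a,b) (u, g locally integrable, here: integrable).\<close>
definition weak_deriv :: "real \<Rightarrow> real \<Rightarrow> (real \<Rightarrow> real) \<Rightarrow> (real \<Rightarrow> real) \<Rightarrow> bool" where
  "weak_deriv a b u g \<longleftrightarrow>
     integrable (intv a b) u \<and> integrable (intv a b) g \<and>
     (\<forall>\<phi>. test_fun a b \<phi> \<longrightarrow>
        (\<integral>x. u x * deriv \<phi> x \<partial>intv a b) = - (\<integral>x. g x * \<phi> x \<partial>intv a b))"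

definition H1 :: "real \<Rightarrow> real \<Rightarrow> (real \<Rightarrow> real) \<Rightarrow> bool" where
  "H1 a b u \<longleftrightarrow> L2 a b u \<and> (\<exists>g. L2 a b g \<and> weak_deriv a b u g)"

definition H2 :: "real \<Rightarrow> real \<Rightarrow> (real \<Rightarrow> real) \<Rightarrow> bool" where
  "H2 a b u \<longleftrightarrow> L2 a b u \<and> (\<exists>g. H1 a b g \<and> weak_deriv a b u g)"

definition H10 :: "real \<Rightarrow> real \<Rightarrow> (real \<Rightarrow> real) \<Rightarrow> bool" where
  "H10 a b u \<longleftrightarrow> L2 a b u \<and> (\<exists>g. L2 a b g \<and> weak_deriv a b u g \<and>
     (\<exists>\<phi>::nat \<Rightarrow> real \<Rightarrow> real. (\<forall>k. test_fun a b (\<phi> k)) \<and>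
        ((\<lambda>k. \<integral>x. (\<phi> k x - u x)\<^sup>2 \<partial>intv a b) \<longlonglongrightarrow> 0) \<and>
        ((\<lambda>k. \<integral>x. (deriv (\<phi> k) x - g x)\<^sup>2 \<partial>intv a b) \<longlonglongrightarrow> 0)))"

definition weak_sol ::
  "real \<Rightarrow> real \<Rightarrow> (real \<Rightarrow> real) \<Rightarrow> (real \<Rightarrow> real) \<Rightarrow> real \<Rightarrow> (real \<Rightarrow> real) \<Rightarrow> bool" where
  "weak_sol a b \<mu> c lam u \<longleftrightarrow> H10 a b u \<and> Linf a b u \<and>
     (\<exists>u'. weak_deriv a b u u' \<and> L2 a b u' \<and>
       (\<forall>\<phi> \<phi>'. H10 a b \<phi> \<and> Linf a b \<phi> \<and> weak_deriv a b \<phi> \<phi>' \<and> L2 a b \<phi>' \<longrightarrow>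
          (\<integral>x. u' x * \<phi>' x \<partial>intv a b) =
          (\<integral>x. \<mu> x * (u' x)\<^sup>2 * \<phi> x \<partial>intv a b) + lam * (\<integral>x. c x * u x * \<phi> x \<partial>intv a b)))"

end

theory Submission
  imports Defs "HOL-Computational_Algebra.Polynomial"
begin

fun Con :: "real set \<Rightarrow> nat \<Rightarrow> (real \<Rightarrow> real) \<Rightarrow> bool" where
  "Con U 0 f = True"
| "Con U (Suc k) f = ((\<forall>x\<in>U. f differentiable (at x)) \<and> Con U k (deriv f))"

lemma Con_mono: "Con U (Suc k) f \<Longrightarrow> Con U k f"
  by (induction k arbitrary: f) auto

lemma Con_mono_add: "Con U (j + d) f \<Longrightarrow> Con U j f"
proof (induction d)
  case (Suc d) then show ?case using Con_mono[of U "j+d" f] by simp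
qed simp

lemma Con_mono': "Con U k f \<Longrightarrow> j \<le> k \<Longrightarrow> Con U j f"
  using Con_mono_add[of U j "k - j" f] by simp

lemma deriv_local:
  assumes "open U" "x \<in> U" "\<And>y. y \<in> U \<Longrightarrow> f y = g y"
  shows "deriv f x = deriv g x"
proof -
  have "\<And>D. DERIV f x :> D \<longleftrightarrow> DERIV g x :> D"
    using assms has_field_derivative_transform_within_open[of f _ x U g]
      has_field_derivative_transform_within_open[of g _ x U f] by metis
  then show ?thesis unfolding deriv_def by simp
qed

lemma differentiable_local:
  fixes f g :: "real \<Rightarrow> real"
  assumes "open U" "x \<in> U" "\<And>y. y \<in> U \<Longrightarrow> f y = g y" "f differentiable (at x)"
  shows "g differentiable (at x)"
  using assms has_field_derivative_transform_within_open[of f _ x U g]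
  by (metis real_differentiable_def)

lemma Con_cong:
  assumes "open U" "\<And>x. x \<in> U \<Longrightarrow> f x = g x"
  shows "Con U k f = Con U k g"
  using assms(2)
proof (induction k arbitrary: f g)
  case 0 then show ?case by simp
next
  case (Suc k)
  have d: "deriv f x = deriv g x" if "x \<in> U" for x
    using deriv_local[OF assms(1) that] Suc.prems by blast
  have "Con U k (deriv f) = Con U k (deriv g)" by (rule Suc.IH) (use d in auto)
  moreover have "(\<forall>x\<in>U. f differentiable (at x)) = (\<forall>x\<in>U. g differentiable (at x))"
    using differentiable_local[OF assms(1)] Suc.prems by metis
  ultimately show ?case by simp
qed

lemma Con_subset: "Con U k f \<Longrightarrow> V \<subseteq> U \<Longrightarrow> Con V k f"
  by (induction k arbitrary: f) auto

lemma Con_Un: "Con U k f \<Longrightarrow> Con V k f \<Longrightarrow> Con (U \<union> V) k f"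
  by (induction k arbitrary: f) auto

lemma deriv_at_diff: "(f::real\<Rightarrow>real) differentiable (at x) \<Longrightarrow> DERIV f x :> deriv f x"
  by (simp add: DERIV_deriv_iff_real_differentiable)

lemma Con_const: "Con U k (\<lambda>x. c)"
proof (induction k arbitrary: c)
  case (Suc k)
  have "deriv (\<lambda>x. c) = (\<lambda>x. 0)" by (rule ext) (rule DERIV_imp_deriv, auto)
  then show ?case using Suc by simp
qed simp

lemma Con_id: "Con U k (\<lambda>x. x)"
proof (cases k)
  case (Suc j)
  have "deriv (\<lambda>x. x) = (\<lambda>x. 1)" by (rule ext) (rule DERIV_imp_deriv, auto)
  then show ?thesis using Suc Con_const by simp
qed simp

lemma Con_add:
  assumes "open U" shows "Con U k f \<Longrightarrow> Con U k g \<Longrightarrow> Con U k (\<lambda>x. f x + g x)"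
proof (induction k arbitrary: f g)
  case (Suc k)
  have df: "\<forall>x\<in>U. f differentiable (at x)" "Con U k (deriv f)" using Suc.prems(1) by simp_all
  have dg: "\<forall>x\<in>U. g differentiable (at x)" "Con U k (deriv g)" using Suc.prems(2) by simp_all
  have d: "deriv (\<lambda>x. f x + g x) x = deriv f x + deriv g x" if "x \<in> U" for x
    using df dg that by (intro DERIV_imp_deriv DERIV_add deriv_at_diff) auto
  have "Con U k (\<lambda>x. deriv f x + deriv g x)" using Suc.IH df dg by blast
  then have "Con U k (deriv (\<lambda>x. f x + g x))" using Con_cong[OF assms d] by simp
  moreover have "\<forall>x\<in>U. (\<lambda>x. f x + g x) differentiable (at x)" using df dg by (simp add: differentiable_add)
  ultimately show ?case by (auto simp only: Con.simps)
qed simp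

lemma Con_mult:
  assumes "open U" shows "Con U k f \<Longrightarrow> Con U k g \<Longrightarrow> Con U k (\<lambda>x. f x * g x)"
proof (induction k arbitrary: f g)
  case (Suc k)
  have df: "\<forall>x\<in>U. f differentiable (at x)" "Con U k (deriv f)" using Suc.prems(1) by simp_all
  have dg: "\<forall>x\<in>U. g differentiable (at x)" "Con U k (deriv g)" using Suc.prems(2) by simp_all
  have f: "Con U k f" "Con U k g" using Suc.prems Con_mono by blast+
  have d: "deriv (\<lambda>x. f x * g x) x = deriv f x * g x + f x * deriv g x" if "x \<in> U" for x
    using df dg that by (intro DERIV_imp_deriv) (auto intro!: derivative_eq_intros deriv_at_diff)
  have "Con U k (\<lambda>x. deriv f x * g x + f x * deriv g x)"
    using Suc.IH df dg f by (intro Con_add assms) blast+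
  then have "Con U k (deriv (\<lambda>x. f x * g x))" using Con_cong[OF assms d] by simp
  moreover have "\<forall>x\<in>U. (\<lambda>x. f x * g x) differentiable (at x)" using df dg by (simp add: differentiable_mult)
  ultimately show ?case by (auto simp only: Con.simps)
qed simp

lemma Con_cmult: "open U \<Longrightarrow> Con U k f \<Longrightarrow> Con U k (\<lambda>x. c * f x)"
  using Con_mult[OF _ Con_const] by blast

lemma Con_diff: "open U \<Longrightarrow> Con U k f \<Longrightarrow> Con U k g \<Longrightarrow> Con U k (\<lambda>x. f x - g x)"
  using Con_add[of U k f "\<lambda>x. (-1) * g x"] Con_cmult[of U k g "-1"] by simp

lemma Con_inverse:
  assumes "open U" "Con U k g" "\<And>x. x \<in> U \<Longrightarrow> g x \<noteq> 0"
  shows "Con U k (\<lambda>x. inverse (g x))"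
  using assms(2)
proof (induction k)
  case (Suc k)
  have dg: "\<forall>x\<in>U. g differentiable (at x)" "Con U k (deriv g)" using Suc.prems by simp_all
  have g: "Con U k g" using Suc.prems Con_mono by blast
  have D: "DERIV (\<lambda>x. inverse (g x)) x :> - deriv g x * (inverse (g x) * inverse (g x))" if "x \<in> U" for x
  proof -
    have "DERIV g x :> deriv g x" using dg that deriv_at_diff by blast
    from DERIV_inverse_fun[OF this assms(3)[OF that]] show ?thesis
      by (simp add: power2_eq_square)
  qed
  have d: "deriv (\<lambda>x. inverse (g x)) x = - deriv g x * (inverse (g x) * inverse (g x))" if "x \<in> U" for x
    using D[OF that] by (rule DERIV_imp_deriv)
  have ig: "Con U k (\<lambda>x. inverse (g x))" using Suc.IH g by blast
  have "Con U k (\<lambda>x. (-1) * deriv g x * (inverse (g x) * inverse (g x)))"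
    using Con_mult[OF assms(1) Con_mult[OF assms(1) Con_const[of U k "-1"] dg(2)] Con_mult[OF assms(1) ig ig]]
    by (simp add: mult.assoc)
  then have "Con U k (deriv (\<lambda>x. inverse (g x)))" using Con_cong[OF assms(1) d] by simp
  moreover have "\<forall>x\<in>U. (\<lambda>x. inverse (g x)) differentiable (at x)"
    using D unfolding real_differentiable_def by blast
  ultimately show ?case by (auto simp only: Con.simps)
qed simp

lemma Con_affine:
  assumes "open U" "Con U k f"
  shows "Con {x. \<alpha> * x + \<beta> \<in> U} k (\<lambda>x. f (\<alpha> * x + \<beta>))"
  using assms(2)
proof (induction k arbitrary: f)
  case (Suc k)
  let ?V = "{x. \<alpha> * x + \<beta> \<in> U}"
  have oV: "open ?V"
    using assms(1) by (intro continuous_open_vimage[unfolded vimage_def]) (auto intro!: continuous_intros)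
  have df: "\<forall>x\<in>U. f differentiable (at x)" "Con U k (deriv f)" using Suc.prems by simp_all
  have D: "DERIV (\<lambda>x. f (\<alpha> * x + \<beta>)) x :> \<alpha> * deriv f (\<alpha> * x + \<beta>)" if "x \<in> ?V" for x
  proof -
    have 1: "DERIV f (\<alpha> * x + \<beta>) :> deriv f (\<alpha> * x + \<beta>)" using df that deriv_at_diff by blast
    have 2: "DERIV (\<lambda>x. \<alpha> * x + \<beta>) x :> \<alpha>" by (auto intro!: derivative_eq_intros)
    from DERIV_chain2[OF 1 2] show ?thesis by (simp add: mult.commute)
  qed
  have d: "deriv (\<lambda>x. f (\<alpha> * x + \<beta>)) x = \<alpha> * deriv f (\<alpha> * x + \<beta>)" if "x \<in> ?V" for x
    using D[OF that] by (rule DERIV_imp_deriv)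
  have "Con ?V k (\<lambda>x. \<alpha> * deriv f (\<alpha> * x + \<beta>))" using Suc.IH[OF df(2)] oV by (intro Con_cmult) auto
  then have "Con ?V k (deriv (\<lambda>x. f (\<alpha> * x + \<beta>)))" using Con_cong[OF oV d] by simp
  moreover have "\<forall>x\<in>?V. (\<lambda>x. f (\<alpha> * x + \<beta>)) differentiable (at x)"
    using D unfolding real_differentiable_def by blast
  ultimately show ?case by (auto simp only: Con.simps)
qed simp

lemma Con_sin_cos: "Con UNIV k sin \<and> Con UNIV k cos"
proof (induction k)
  case (Suc k)
  have 1: "deriv sin = cos" "deriv cos = (\<lambda>x. (-1) * sin x)"
    by (auto intro!: ext DERIV_imp_deriv derivative_eq_intros)
  have 2: "\<forall>x::real. sin differentiable (at x) \<and> cos differentiable (at x)"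
    using DERIV_sin DERIV_cos real_differentiable_def by blast+
  show ?case using Suc Con_cmult[of UNIV k sin "-1"] 2 by (simp only: Con.simps 1) auto
qed simp

lemma Con_invpow: "Con {0<..} k (\<lambda>x. inverse x ^ n)"
proof (induction k arbitrary: n)
  case (Suc k)
  have D: "DERIV (\<lambda>x. inverse x ^ n) x :> (- real n) * inverse x ^ (Suc n)" if "x \<in> {0<..}" for x
  proof -
    have p: "DERIV (\<lambda>y. y ^ n) (inverse x) :> real n * (inverse x) ^ (n - Suc 0)" by (rule DERIV_pow)
    have i: "DERIV inverse x :> - (inverse x ^ 2)" using DERIV_inverse[of x] that by (simp add: numeral_2_eq_2)
    have "DERIV (\<lambda>x. inverse x ^ n) x :> real n * inverse x ^ (n - 1) * (- (inverse x ^ 2))"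
      using DERIV_chain2[OF p i] by simp
    moreover have "real n * inverse x ^ (n - 1) * (- (inverse x ^ 2)) = (- real n) * inverse x ^ (Suc n)"
      by (cases n) (auto simp: power2_eq_square algebra_simps)
    ultimately show ?thesis by (simp only:)
  qed
  have d: "deriv (\<lambda>x. inverse x ^ n) x = (- real n) * inverse x ^ (Suc n)" if "x \<in> {0<..}" for x
    using D[OF that] by (rule DERIV_imp_deriv)
  have "Con {0<..} k (\<lambda>x. (- real n) * inverse x ^ (Suc n))" by (rule Con_cmult[OF open_greaterThan Suc.IH])
  then have "Con {0<..} k (deriv (\<lambda>x. inverse x ^ n))" using Con_cong[OF open_greaterThan d] by simp
  moreover have "\<forall>x\<in>{0::real<..}. (\<lambda>x. inverse x ^ n) differentiable (at x)"
    using D unfolding real_differentiable_def by blast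
  ultimately show ?case by (auto simp only: Con.simps)
qed simp

lemma Con_ln: "Con {0<..} k ln"
proof (cases k)
  case (Suc j)
  have D: "DERIV ln x :> inverse x ^ 1" if "x \<in> {0<..}" for x :: real
    using that DERIV_ln by auto
  have d: "deriv ln x = inverse x ^ 1" if "x \<in> {0<..}" for x :: real
    using D[OF that] by (rule DERIV_imp_deriv)
  have "Con {0<..} j (deriv ln)" using Con_cong[OF open_greaterThan d] Con_invpow[of j 1] by simp
  moreover have "\<forall>x\<in>{0::real<..}. ln differentiable (at x)"
    using D unfolding real_differentiable_def by blast
  ultimately show ?thesis using Suc by (auto simp only: Con.simps)
qed simp

lemma Con_test:
  "Con U (Suc k) f \<Longrightarrow> j \<le> k \<Longrightarrow> x \<in> U \<Longrightarrow> (deriv ^^ j) f differentiable (at x)"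
proof (induction k arbitrary: f j)
  case 0 then show ?case by simp
next
  case (Suc k)
  show ?case
  proof (cases j)
    case 0 then show ?thesis using Suc.prems by simp
  next
    case (Suc i)
    then show ?thesis using Suc.IH[of "deriv f" i] Suc.prems by (simp add: funpow_Suc_right del: funpow.simps)
  qed
qed


definition hP :: "real poly \<Rightarrow> real \<Rightarrow> real" where
  "hP P x = (if 0 < x then poly P (inverse x) * exp (- inverse x) else 0)"

definition Qp :: "real poly \<Rightarrow> real poly" where
  "Qp P = [:0,0,1:] * (P - pderiv P)"

lemma poly_exp_lim:
  fixes R :: "real poly"
  shows "((\<lambda>z. poly R z * exp (- z)) \<longlongrightarrow> 0) at_top"
proof -
  have eq: "(\<lambda>z. poly R z * exp (- z)) = (\<lambda>z. \<Sum>i\<le>degree R. coeff R i * (z ^ i / exp z))"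
    by (rule ext) (simp add: poly_altdef sum_distrib_right exp_minus divide_inverse mult.assoc)
  have "((\<lambda>z. \<Sum>i\<le>degree R. coeff R i * (z ^ i / exp z)) \<longlongrightarrow> 0) at_top"
    by (intro tendsto_null_sum tendsto_mult_right_zero tendsto_power_div_exp_0)
  then show ?thesis unfolding eq .
qed

lemma hP_quot_lim: "((\<lambda>y. hP P y / y) \<longlongrightarrow> 0) (at 0)"
proof -
  have r: "((\<lambda>y. poly (pCons 0 P) (inverse y) * exp (- inverse y)) \<longlongrightarrow> 0) (at_right 0)"
    using filterlim_compose[OF poly_exp_lim[of "pCons 0 P"] filterlim_inverse_at_top_right] by simp
  have "\<forall>\<^sub>F y in at_right 0. poly (pCons 0 P) (inverse y) * exp (- inverse y) = hP P y / y"
    using eventually_at_right_less[of "0::real"]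
    by eventually_elim (auto simp: hP_def field_simps)
  with r have R: "((\<lambda>y. hP P y / y) \<longlongrightarrow> 0) (at_right 0)" by (rule Lim_transform_eventually)
  have ev: "\<forall>\<^sub>F y in at_left (0::real). y \<in> {-1<..<0}" by (rule eventually_at_left_real) simp
  have "\<forall>\<^sub>F y in at_left 0. 0 = hP P y / y"
    using ev
    by eventually_elim (auto simp: hP_def)
  then have L: "((\<lambda>y. hP P y / y) \<longlongrightarrow> 0) (at_left 0)"
    by (rule Lim_transform_eventually[OF tendsto_const])
  show ?thesis using L R by (simp add: filterlim_at_split)
qed

lemma hP_DERIV: "(hP P has_real_derivative hP (Qp P) x) (at x)"
proof -
  consider "x > 0" | "x < 0" | "x = 0" by linarith
  then show ?thesis
  proof cases
    case 1
    have h1: "((\<lambda>y. poly P (inverse y)) has_real_derivative poly (pderiv P) (inverse x) * (- (inverse x ^ 2))) (at x)"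
    proof -
      have i: "DERIV inverse x :> - (inverse x ^ 2)" using DERIV_inverse[of x] 1 by (simp add: numeral_2_eq_2)
      show ?thesis using DERIV_chain2[OF poly_DERIV i] .
    qed
    have h2: "((\<lambda>y. exp (- inverse y)) has_real_derivative exp (- inverse x) * (inverse x ^ 2)) (at x)"
    proof -
      have i: "DERIV (\<lambda>y. - inverse y) x :> (inverse x ^ 2)" using DERIV_minus[OF DERIV_inverse[of x]] 1 by (simp add: numeral_2_eq_2)
      show ?thesis using DERIV_chain2[OF DERIV_exp i] .
    qed
    have D: "((\<lambda>y. poly P (inverse y) * exp (- inverse y)) has_real_derivative hP (Qp P) x) (at x)"
    proof -
      have q: "poly (Qp P) (inverse x) = inverse x ^ 2 * poly P (inverse x) - inverse x ^ 2 * poly (pderiv P) (inverse x)"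
        by (simp add: Qp_def power2_eq_square algebra_simps)
      then have eq: "hP (Qp P) x = poly (pderiv P) (inverse x) * (- (inverse x ^ 2)) * exp (- inverse x) +
          exp (- inverse x) * (inverse x ^ 2) * poly P (inverse x)"
        using 1 by (simp add: hP_def q algebra_simps)
      show ?thesis by (subst eq) (rule DERIV_mult[OF h1 h2])
    qed
    show ?thesis
      by (rule has_field_derivative_transform_within_open[OF D, of "{0<..}"]) (use 1 in \<open>auto simp: hP_def\<close>)
  next
    case 2
    have D: "((\<lambda>y. 0) has_real_derivative hP (Qp P) x) (at x)" using 2 by (simp add: hP_def)
    show ?thesis
      by (rule has_field_derivative_transform_within_open[OF D, of "{..<0}"]) (use 2 in \<open>auto simp: hP_def\<close>)
  next
    case 3
    show ?thesis unfolding has_field_derivative_iff using hP_quot_lim[of P] 3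
      by (simp add: hP_def)
  qed
qed

lemma deriv_hP: "deriv (hP P) = hP (Qp P)"
  by (rule ext) (rule DERIV_imp_deriv[OF hP_DERIV])

lemma Con_hP: "Con UNIV k (hP P)"
proof (induction k arbitrary: P)
  case (Suc k)
  have "\<forall>x. hP P differentiable (at x)" using hP_DERIV real_differentiable_def by blast
  then show ?case using Suc by (simp add: deriv_hP)
qed simp

definition E :: "real \<Rightarrow> real" where "E = hP 1"

lemma E_eq: "E x = (if 0 < x then exp (- inverse x) else 0)"
  by (simp add: E_def hP_def)

lemma E_nonneg: "E x \<ge> 0" by (simp add: E_eq)
lemma E_pos: "x > 0 \<Longrightarrow> E x > 0" by (simp add: E_eq)

definition sig :: "real \<Rightarrow> real" where
  "sig t = E t * inverse (E t + E (1 - t))"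

lemma sig_den_pos: "E t + E (1 - t) > 0"
proof (cases "t > 0")
  case True then show ?thesis using E_pos[of t] E_nonneg[of "1-t"] by simp
next
  case False then show ?thesis using E_pos[of "1-t"] E_nonneg[of t] by simp
qed

lemma sig_den_ne: "E t + E (-1 * t + 1) \<noteq> 0"
  using sig_den_pos[of t] by simp

lemma Con_sig: "Con UNIV k sig"
proof -
  have a: "Con UNIV k (\<lambda>t. E (-1 * t + 1))"
    using Con_affine[OF open_UNIV Con_hP[of k 1], of "-1" 1] by (simp add: E_def)
  have "Con UNIV k (\<lambda>t. E t + E (-1 * t + 1))"
    by (rule Con_add[OF open_UNIV _ a]) (simp add: E_def Con_hP)
  then have "Con UNIV k (\<lambda>t. inverse (E t + E (-1 * t + 1)))"
    by (rule Con_inverse[OF open_UNIV]) (rule sig_den_ne)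
  then have "Con UNIV k (\<lambda>t. E t * inverse (E t + E (-1 * t + 1)))"
    by (rule Con_mult[OF open_UNIV, rotated]) (simp add: E_def Con_hP)
  then show ?thesis by (simp add: sig_def[abs_def] algebra_simps)
qed

lemma sig_0: "t \<le> 0 \<Longrightarrow> sig t = 0" by (simp add: sig_def E_eq)
lemma sig_1: "t \<ge> 1 \<Longrightarrow> sig t = 1"
  using sig_den_pos[of t] by (simp add: sig_def E_eq)
lemma sig_nonneg: "sig t \<ge> 0"
  using sig_den_pos[of t] E_nonneg[of t] by (simp add: sig_def)
lemma sig_le1: "sig t \<le> 1"
  using sig_den_pos[of t] E_nonneg[of t] E_nonneg[of "1-t"] by (simp add: sig_def field_simps)

lemma sig_diff: "sig differentiable (at t)"
  using Con_sig[of 1] by simp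

lemma sig_DERIV: "DERIV sig t :> deriv sig t"
  using sig_diff deriv_at_diff by blast

lemma dsig_diff: "deriv sig differentiable (at t)"
  using Con_sig[of 2] by (simp add: numeral_2_eq_2)

lemma dsig_0: assumes "t < 0 \<or> t > 1" shows "deriv sig t = 0"
proof -
  from assms consider "t < 0" | "t > 1" by blast
  then show ?thesis
  proof cases
    case 1
    have "deriv sig t = deriv (\<lambda>_. 0) t"
      by (rule deriv_local[of "{..<0}"]) (use 1 sig_0 in auto)
    then show ?thesis by simp
  next
    case 2
    have "deriv sig t = deriv (\<lambda>_. 1) t"
      by (rule deriv_local[of "{1<..}"]) (use 2 sig_1 in auto)
    then show ?thesis by simp
  qed
qed

lemma dsig_bound: "\<exists>M. \<forall>t. \<bar>deriv sig t\<bar> \<le> M"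
proof -
  have c: "continuous_on {0..1} (deriv sig)"
    using dsig_diff by (meson continuous_at_imp_continuous_on differentiable_imp_continuous_within)
  have "bounded (deriv sig ` {0..1})"
    by (rule compact_imp_bounded[OF compact_continuous_image[OF c compact_Icc]])
  then obtain M where M0: "\<forall>x\<in>deriv sig ` {0..1}. \<bar>x\<bar> \<le> M"
    unfolding bounded_real by blast
  have M: "\<And>t. t \<in> {0..1} \<Longrightarrow> \<bar>deriv sig t\<bar> \<le> M" using M0 by blast
  have "\<bar>deriv sig t\<bar> \<le> M" for t
  proof (cases "t \<in> {0..1}")
    case True then show ?thesis using M by blast
  next
    case False then have "deriv sig t = 0" using dsig_0 by auto
    then show ?thesis using M[of 0] by simp
  qed
  then show ?thesis by blast
qed

definition Msig :: real where "Msig = (SOME M. \<forall>t. \<bar>deriv sig t\<bar> \<le> M)"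

lemma Msig: "\<bar>deriv sig t\<bar> \<le> Msig"
  using someI_ex[OF dsig_bound] unfolding Msig_def by blast

lemma Msig_nonneg: "Msig \<ge> 0"
  using Msig[of 0] by simp


lemma sets_intv_ok: "{a<..<b::real} \<inter> space lborel \<in> sets lborel" by simp

lemma space_intv: "space (intv a b) = {a<..<b}"
  by (simp add: intv_def space_restrict_space)

lemma finite_intv: "finite_measure (intv a b)"
proof (rule finite_measureI)
  show "emeasure (intv a b) (space (intv a b)) \<noteq> \<infinity>"
    unfolding space_intv intv_def by (subst emeasure_restrict_space) (auto, cases "a \<le> b", auto)
qed

lemma meas_intv: "f \<in> borel_measurable borel \<Longrightarrow> f \<in> borel_measurable (intv a b)"
  unfolding intv_def by (rule measurable_restrict_space1) simp

lemma integrable_intv_bound: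
  fixes f :: "real \<Rightarrow> real"
  assumes "f \<in> borel_measurable borel" "\<And>x. a < x \<Longrightarrow> x < b \<Longrightarrow> \<bar>f x\<bar> \<le> B"
  shows "integrable (intv a b) f"
proof (rule finite_measure.integrable_const_bound[OF finite_intv, where B=B])
  show "AE x in intv a b. norm (f x) \<le> B"
    by (rule AE_I2) (use assms(2) in \<open>auto simp: space_intv\<close>)
qed (rule meas_intv[OF assms(1)])

lemma AE_intv: "(\<And>x. a < x \<Longrightarrow> x < b \<Longrightarrow> P x) \<Longrightarrow> AE x in intv a b. P x"
  by (rule AE_I2) (auto simp: space_intv)

lemma integral_intv_const: "a \<le> b \<Longrightarrow> (\<integral>x. c \<partial>intv a b) = c * (b - a)"
proof -
  assume "a \<le> b"
  then have "measure (intv a b) (space (intv a b)) = b - a"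
    unfolding space_intv intv_def by (simp add: measure_restrict_space)
  then show ?thesis by simp
qed

lemma vd: "(F has_real_derivative f) (at x) \<Longrightarrow> (F has_vector_derivative f) (at x within S)"
  by (simp add: has_real_derivative_iff_has_vector_derivative has_vector_derivative_at_within)

lemma ftc3:
  fixes f F1 F2 F3 f1 f2 f3 :: "real \<Rightarrow> real"
  assumes d1: "\<And>x. 0 \<le> x \<Longrightarrow> x \<le> 1 \<Longrightarrow> (F1 has_real_derivative f1 x) (at x)" and c1: "continuous_on {0..1} f1"
    and d2: "\<And>x. 1 \<le> x \<Longrightarrow> x \<le> 2 \<Longrightarrow> (F2 has_real_derivative f2 x) (at x)" and c2: "continuous_on {1..2} f2"
    and d3: "\<And>x. 2 \<le> x \<Longrightarrow> x \<le> 3 \<Longrightarrow> (F3 has_real_derivative f3 x) (at x)" and c3: "continuous_on {2..3} f3"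
    and e1: "\<And>x. 0 < x \<Longrightarrow> x < 1 \<Longrightarrow> f x = f1 x"
    and e2: "\<And>x. 1 < x \<Longrightarrow> x < 2 \<Longrightarrow> f x = f2 x"
    and e3: "\<And>x. 2 < x \<Longrightarrow> x < 3 \<Longrightarrow> f x = f3 x"
    and m: "f \<in> borel_measurable borel"
  shows "integrable (intv 0 3) f \<and> (\<integral>x. f x \<partial>intv 0 3) = (F1 1 - F1 0) + (F2 2 - F2 1) + (F3 3 - F3 2)"
proof -
  define g where "g x = indicator {0..1} x *\<^sub>R f1 x + indicator {1..2} x *\<^sub>R f2 x + indicator {2..3} x *\<^sub>R f3 x" for x :: real
  have i1: "integrable lborel (\<lambda>x. indicator {0..1} x *\<^sub>R f1 x)"
    using borel_integrable_atLeastAtMost'[OF c1] unfolding set_integrable_def .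
  have i2: "integrable lborel (\<lambda>x. indicator {1..2} x *\<^sub>R f2 x)"
    using borel_integrable_atLeastAtMost'[OF c2] unfolding set_integrable_def .
  have i3: "integrable lborel (\<lambda>x. indicator {2..3} x *\<^sub>R f3 x)"
    using borel_integrable_atLeastAtMost'[OF c3] unfolding set_integrable_def .
  have ig: "integrable lborel g" unfolding g_def using i1 i2 i3 by auto
  have Ig: "integral\<^sup>L lborel g = (F1 1 - F1 0) + (F2 2 - F2 1) + (F3 3 - F3 2)"
  proof -
    have "integral\<^sup>L lborel g = integral\<^sup>L lborel (\<lambda>x. indicator {0..1} x *\<^sub>R f1 x)
      + integral\<^sup>L lborel (\<lambda>x. indicator {1..2} x *\<^sub>R f2 x) + integral\<^sup>L lborel (\<lambda>x. indicator {2..3} x *\<^sub>R f3 x)"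
      unfolding g_def using i1 i2 i3 by simp
    also have "\<dots> = (F1 1 - F1 0) + (F2 2 - F2 1) + (F3 3 - F3 2)"
      using integral_FTC_atLeastAtMost[of 0 1 F1 f1, OF _ vd[OF d1] c1]
        integral_FTC_atLeastAtMost[of 1 2 F2 f2, OF _ vd[OF d2] c2]
        integral_FTC_atLeastAtMost[of 2 3 F3 f3, OF _ vd[OF d3] c3] by simp
    finally show ?thesis .
  qed
  have ae: "AE x in lborel. g x = indicator {0<..<3} x *\<^sub>R f x"
  proof -
    have "AE x in lborel. (x::real) \<noteq> 0 \<and> x \<noteq> 1 \<and> x \<noteq> 2 \<and> x \<noteq> 3"
      using AE_lborel_singleton[of "0::real"] AE_lborel_singleton[of "1::real"]
        AE_lborel_singleton[of "2::real"] AE_lborel_singleton[of "3::real"] by eventually_elim auto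
    then show ?thesis
    proof eventually_elim
      case (elim x)
      show ?case
      proof (cases "x < 0 \<or> x > 3")
        case True then show ?thesis by (auto simp: g_def)
      next
        case False
        then consider "0 < x \<and> x < 1" | "1 < x \<and> x < 2" | "2 < x \<and> x < 3" using elim by linarith
        then show ?thesis by cases (auto simp: g_def e1 e2 e3)
      qed
    qed
  qed
  have mi: "(\<lambda>x. indicator {0<..<3} x *\<^sub>R f x) \<in> borel_measurable lborel"
    using m by simp
  have int: "integrable lborel (\<lambda>x. indicator {0<..<3} x *\<^sub>R f x)"
    by (rule integrable_cong_AE_imp[OF ig mi ae])
  have "integral\<^sup>L lborel (\<lambda>x. indicator {0<..<3} x *\<^sub>R f x) = integral\<^sup>L lborel g"
  proof (rule integral_cong_AE[OF mi])
    show "g \<in> borel_measurable lborel" using ig by (rule borel_measurable_integrable)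
    show "AE x in lborel. indicator {0<..<3} x *\<^sub>R f x = g x" using ae by eventually_elim simp
  qed
  then show ?thesis using int Ig
    by (simp add: intv_def integrable_restrict_space integral_restrict_space)
qed

lemma sq_integrable_imp_integrable:
  fixes f :: "real \<Rightarrow> real"
  assumes "integrable (intv a b) (\<lambda>x. (f x)\<^sup>2)" "f \<in> borel_measurable (intv a b)"
  shows "integrable (intv a b) f"
proof -
  have "integrable (intv a b) (\<lambda>x. 1 + (f x)\<^sup>2)"
    using Bochner_Integration.integrable_add[OF finite_measure.integrable_const[OF finite_intv] assms(1)] by simp
  then show ?thesis
  proof (rule Bochner_Integration.integrable_bound)
    show "AE x in intv a b. norm (f x) \<le> norm (1 + (f x)\<^sup>2)"
    proof (rule AE_I2)
      fix x
      have "0 \<le> (\<bar>f x\<bar> - 1)\<^sup>2" by simp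
      then have "2 * \<bar>f x\<bar> \<le> 1 + (f x)\<^sup>2" by (simp add: power2_diff power2_abs)
      moreover have "0 \<le> (f x)\<^sup>2" by simp
      ultimately show "norm (f x) \<le> norm (1 + (f x)\<^sup>2)" by simp
    qed
  qed (fact assms)
qed

lemma integrable_mult_sq:
  fixes w d :: "real \<Rightarrow> real"
  assumes "integrable M (\<lambda>x. (w x)\<^sup>2)" "integrable M (\<lambda>x. (d x)\<^sup>2)"
    "w \<in> borel_measurable M" "d \<in> borel_measurable M"
  shows "integrable M (\<lambda>x. w x * d x)"
proof -
  have "integrable M (\<lambda>x. (w x)\<^sup>2 + (d x)\<^sup>2)" using assms by auto
  then show ?thesis
  proof (rule Bochner_Integration.integrable_bound)
    show "AE x in M. norm (w x * d x) \<le> norm ((w x)\<^sup>2 + (d x)\<^sup>2)"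
    proof (rule AE_I2)
      fix x
      have "2 * \<bar>w x * d x\<bar> \<le> (w x)\<^sup>2 + (d x)\<^sup>2"
        using sum_squares_bound[of "\<bar>w x\<bar>" "\<bar>d x\<bar>"] by (simp add: abs_mult power2_abs)
      then show "norm (w x * d x) \<le> norm ((w x)\<^sup>2 + (d x)\<^sup>2)" by simp
    qed
  qed (use assms in auto)
qed

lemma L2_conv:
  fixes w :: "real \<Rightarrow> real" and d :: "nat \<Rightarrow> real \<Rightarrow> real"
  assumes w2: "integrable M (\<lambda>x. (w x)\<^sup>2)" and d2: "\<And>k. integrable M (\<lambda>x. (d k x)\<^sup>2)"
    and wm: "w \<in> borel_measurable M" and dm: "\<And>k. d k \<in> borel_measurable M"
    and lim: "(\<lambda>k. \<integral>x. (d k x)\<^sup>2 \<partial>M) \<longlonglongrightarrow> 0"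
  shows "(\<lambda>k. \<integral>x. w x * d k x \<partial>M) \<longlonglongrightarrow> 0"
proof -
  define W where "W = (\<integral>x. (w x)\<^sup>2 \<partial>M)"
  have W0: "W \<ge> 0" unfolding W_def by (intro integral_nonneg_AE) auto
  have key: "\<bar>\<integral>x. w x * d k x \<partial>M\<bar> \<le> (e * W + (\<integral>x. (d k x)\<^sup>2 \<partial>M) / e) / 2" if e: "e > 0" for e k
  proof -
    have "\<bar>\<integral>x. w x * d k x \<partial>M\<bar> \<le> (\<integral>x. \<bar>w x * d k x\<bar> \<partial>M)"
      by (rule integral_abs_bound[THEN order_trans]) simp
    also have "\<dots> \<le> (\<integral>x. (e * (w x)\<^sup>2 + (d k x)\<^sup>2 / e) / 2 \<partial>M)"
    proof (rule integral_mono)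
      show "integrable M (\<lambda>x. \<bar>w x * d k x\<bar>)"
        using integrable_mult_sq[OF w2 d2 wm dm] by auto
      show "integrable M (\<lambda>x. (e * (w x)\<^sup>2 + (d k x)\<^sup>2 / e) / 2)"
        using w2 d2 by auto
      fix x
      have "0 \<le> (sqrt e * \<bar>w x\<bar> - \<bar>d k x\<bar> / sqrt e)\<^sup>2" by simp
      also have "\<dots> = e * (w x)\<^sup>2 + (d k x)\<^sup>2 / e - 2 * \<bar>w x * d k x\<bar>"
        using e by (simp add: power2_diff power_divide real_sqrt_pow2 abs_mult field_simps power2_abs)
      finally show "\<bar>w x * d k x\<bar> \<le> (e * (w x)\<^sup>2 + (d k x)\<^sup>2 / e) / 2" by simp
    qed
    also have "\<dots> = (e * W + (\<integral>x. (d k x)\<^sup>2 \<partial>M) / e) / 2"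
      using w2 d2 by (simp add: W_def)
    finally show ?thesis .
  qed
  show ?thesis
  proof (rule LIMSEQ_I)
    fix r :: real assume r: "r > 0"
    define e where "e = r / (W + 1)"
    have e: "e > 0" using r W0 by (simp add: e_def)
    have eW: "e * W < r" using r W0 by (simp add: e_def field_simps)
    have "\<exists>N. \<forall>k\<ge>N. norm ((\<integral>x. (d k x)\<^sup>2 \<partial>M) - 0) < r * e"
      using LIMSEQ_D[OF lim, of "r * e"] r e by simp
    then obtain N where N: "\<And>k. k \<ge> N \<Longrightarrow> \<bar>\<integral>x. (d k x)\<^sup>2 \<partial>M\<bar> < r * e" by auto
    have "norm ((\<integral>x. w x * d k x \<partial>M) - 0) < r" if "k \<ge> N" for k
    proof -
      have "(\<integral>x. (d k x)\<^sup>2 \<partial>M) / e < r" using N[OF that] e by (simp add: field_simps)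
      then show ?thesis using key[OF e, of k] eW by simp
    qed
    then show "\<exists>N. \<forall>k\<ge>N. norm ((\<integral>x. w x * d k x \<partial>M) - 0) < r" by blast
  qed
qed


lemma test_diff: "test_fun a b \<psi> \<Longrightarrow> \<psi> differentiable (at x)"
  unfolding test_fun_def using funpow_0 by metis

lemma test_DERIV: "test_fun a b \<psi> \<Longrightarrow> DERIV \<psi> x :> deriv \<psi> x"
  using test_diff deriv_at_diff by blast

lemma test_deriv_diff: "test_fun a b \<psi> \<Longrightarrow> deriv \<psi> differentiable (at x)"
proof -
  assume "test_fun a b \<psi>"
  then have "(deriv ^^ (Suc 0)) \<psi> differentiable (at x)" unfolding test_fun_def by blast
  then show ?thesis by simp
qed

lemma test_cont: "test_fun a b \<psi> \<Longrightarrow> continuous_on S \<psi>"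
  using test_diff by (meson continuous_at_imp_continuous_on differentiable_imp_continuous_within)

lemma test_deriv_cont: "test_fun a b \<psi> \<Longrightarrow> continuous_on S (deriv \<psi>)"
  using test_deriv_diff by (meson continuous_at_imp_continuous_on differentiable_imp_continuous_within)

lemma test_meas: "test_fun a b \<psi> \<Longrightarrow> \<psi> \<in> borel_measurable borel"
  by (rule borel_measurable_continuous_onI) (rule test_cont)

lemma test_deriv_meas: "test_fun a b \<psi> \<Longrightarrow> deriv \<psi> \<in> borel_measurable borel"
  by (rule borel_measurable_continuous_onI) (rule test_deriv_cont)

lemma deriv_zero_outside:
  assumes "open S" "x \<in> S" "\<And>y. y \<in> S \<Longrightarrow> f y = 0"
  shows "deriv f x = 0"
proof -
  have "deriv f x = deriv (\<lambda>_. 0) x" by (rule deriv_local[OF assms(1,2)]) (use assms(3) in auto)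
  then show ?thesis by simp
qed

lemma test_deriv_test: "test_fun a b \<psi> \<Longrightarrow> test_fun a b (deriv \<psi>)"
proof -
  assume t: "test_fun a b \<psi>"
  then obtain K where K: "compact K" "K \<subseteq> {a<..<b}" "\<And>x. x \<notin> K \<Longrightarrow> \<psi> x = 0"
    unfolding test_fun_def by blast
  have "\<forall>k x. (deriv ^^ k) (deriv \<psi>) differentiable (at x)"
    using t unfolding test_fun_def by (metis funpow_Suc_right o_apply)
  moreover have "deriv \<psi> x = 0" if "x \<notin> K" for x
    by (rule deriv_zero_outside[of "- K"]) (use K that compact_imp_closed in auto)
  ultimately show ?thesis unfolding test_fun_def using K by blast
qed

lemma test_bound: "test_fun a b \<psi> \<Longrightarrow> \<exists>B. \<forall>x. \<bar>\<psi> x\<bar> \<le> B"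
proof -
  assume t: "test_fun a b \<psi>"
  then obtain K where K: "compact K" "K \<subseteq> {a<..<b}" "\<And>x. x \<notin> K \<Longrightarrow> \<psi> x = 0"
    unfolding test_fun_def by blast
  have "bounded (\<psi> ` K)"
    by (rule compact_imp_bounded[OF compact_continuous_image[OF test_cont[OF t] K(1)]])
  then obtain B where B: "\<forall>y\<in>\<psi> ` K. \<bar>y\<bar> \<le> B" unfolding bounded_real by blast
  have "\<bar>\<psi> x\<bar> \<le> max B 0" for x
    using B K(3)[of x] by (cases "x \<in> K") force+
  then show ?thesis by blast
qed

lemma test_boundary: "test_fun a b \<psi> \<Longrightarrow> \<psi> a = 0 \<and> \<psi> b = 0"
  unfolding test_fun_def by force

lemma cont_bound: "continuous_on {a..b} (f::real\<Rightarrow>real) \<Longrightarrow> \<exists>B. \<forall>x\<in>{a..b}. \<bar>f x\<bar> \<le> B"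
proof -
  assume c: "continuous_on {a..b} f"
  have "bounded (f ` {a..b})" by (rule compact_imp_bounded[OF compact_continuous_image[OF c compact_Icc]])
  then show ?thesis unfolding bounded_real by blast
qed

lemma bound3:
  fixes f f1 f2 f3 :: "real \<Rightarrow> real"
  assumes "continuous_on {0..1} f1" "continuous_on {1..2} f2" "continuous_on {2..3} f3"
    "\<And>x. 0 < x \<Longrightarrow> x \<le> 1 \<Longrightarrow> f x = f1 x" "\<And>x. 1 < x \<Longrightarrow> x \<le> 2 \<Longrightarrow> f x = f2 x"
    "\<And>x. 2 < x \<Longrightarrow> x < 3 \<Longrightarrow> f x = f3 x"
  shows "\<exists>B. \<forall>x. 0 < x \<longrightarrow> x < 3 \<longrightarrow> \<bar>f x\<bar> \<le> B"
proof -
  obtain B1 where B1: "\<forall>x\<in>{0..1}. \<bar>f1 x\<bar> \<le> B1" using cont_bound[OF assms(1)] by blast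
  obtain B2 where B2: "\<forall>x\<in>{1..2}. \<bar>f2 x\<bar> \<le> B2" using cont_bound[OF assms(2)] by blast
  obtain B3 where B3: "\<forall>x\<in>{2..3}. \<bar>f3 x\<bar> \<le> B3" using cont_bound[OF assms(3)] by blast
  have "\<bar>f x\<bar> \<le> max B1 (max B2 B3)" if "0 < x" "x < 3" for x
  proof -
    consider "x \<le> 1" | "1 < x \<and> x \<le> 2" | "2 < x" by linarith
    then show ?thesis
    proof cases
      case 1 then have "\<bar>f x\<bar> \<le> B1" using that assms(4) B1 by simp
      then show ?thesis by simp
    next
      case 2 then have "\<bar>f x\<bar> \<le> B2" using that assms(5) B2 by simp
      then show ?thesis by simp
    next
      case 3 then have "\<bar>f x\<bar> \<le> B3" using that assms(6) B3 by simp
      then show ?thesis by simp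
    qed
  qed
  then show ?thesis by blast
qed

lemma weak3:
  fixes u g U1 U2 U3 G1 G2 G3 :: "real \<Rightarrow> real"
  assumes d1: "\<And>x. 0 \<le> x \<Longrightarrow> x \<le> 1 \<Longrightarrow> (U1 has_real_derivative G1 x) (at x)" and c1: "continuous_on {0..1} G1"
    and d2: "\<And>x. 1 \<le> x \<Longrightarrow> x \<le> 2 \<Longrightarrow> (U2 has_real_derivative G2 x) (at x)" and c2: "continuous_on {1..2} G2"
    and d3: "\<And>x. 2 \<le> x \<Longrightarrow> x \<le> 3 \<Longrightarrow> (U3 has_real_derivative G3 x) (at x)" and c3: "continuous_on {2..3} G3"
    and m12: "U1 1 = U2 1" and m23: "U2 2 = U3 2"
    and u1: "\<And>x. 0 < x \<Longrightarrow> x \<le> 1 \<Longrightarrow> u x = U1 x"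
    and u2: "\<And>x. 1 < x \<Longrightarrow> x \<le> 2 \<Longrightarrow> u x = U2 x"
    and u3: "\<And>x. 2 < x \<Longrightarrow> x < 3 \<Longrightarrow> u x = U3 x"
    and g1: "\<And>x. 0 < x \<Longrightarrow> x < 1 \<Longrightarrow> g x = G1 x"
    and g2: "\<And>x. 1 < x \<Longrightarrow> x < 2 \<Longrightarrow> g x = G2 x"
    and bg: "\<exists>C. \<forall>x. 0 < x \<longrightarrow> x < 3 \<longrightarrow> \<bar>g x\<bar> \<le> C"
    and g3: "\<And>x. 2 < x \<Longrightarrow> x < 3 \<Longrightarrow> g x = G3 x"
    and mu: "u \<in> borel_measurable borel" and mg: "g \<in> borel_measurable borel"
  shows "weak_deriv 0 3 u g"
proof -
  have cU1: "continuous_on {0..1} U1" using d1 by (intro DERIV_atLeastAtMost_imp_continuous_on) blast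
  have cU2: "continuous_on {1..2} U2" using d2 by (intro DERIV_atLeastAtMost_imp_continuous_on) blast
  have cU3: "continuous_on {2..3} U3" using d3 by (intro DERIV_atLeastAtMost_imp_continuous_on) blast
  obtain Bu where Bu: "\<And>x. 0 < x \<Longrightarrow> x < 3 \<Longrightarrow> \<bar>u x\<bar> \<le> Bu"
    using bound3[OF cU1 cU2 cU3 u1 u2 u3] by blast
  obtain Bg where Bg: "\<And>x. 0 < x \<Longrightarrow> x < 3 \<Longrightarrow> \<bar>g x\<bar> \<le> Bg"
    using bg by blast
  have Bu0: "0 \<le> Bu" using Bu[of 1] by force
  have Bg0: "0 \<le> Bg" using Bg[of 1] by force
  have iu: "integrable (intv 0 3) u" by (rule integrable_intv_bound[OF mu Bu])
  have ig: "integrable (intv 0 3) g" by (rule integrable_intv_bound[OF mg Bg])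
  have main: "(\<integral>x. u x * deriv \<psi> x \<partial>intv 0 3) = - (\<integral>x. g x * \<psi> x \<partial>intv 0 3)" if t: "test_fun 0 3 \<psi>" for \<psi>
  proof -
    obtain B1 where B1: "\<And>x. \<bar>\<psi> x\<bar> \<le> B1" using test_bound[OF t] by blast
    obtain B2 where B2: "\<And>x. \<bar>deriv \<psi> x\<bar> \<le> B2" using test_bound[OF test_deriv_test[OF t]] by blast
    have i1: "integrable (intv 0 3) (\<lambda>x. u x * deriv \<psi> x)"
    proof (rule integrable_intv_bound[where B="Bu * B2"])
      show "(\<lambda>x. u x * deriv \<psi> x) \<in> borel_measurable borel"
        by (intro borel_measurable_times mu test_deriv_meas[OF t])
      fix x :: real assume "0 < x" "x < 3"
      then show "\<bar>u x * deriv \<psi> x\<bar> \<le> Bu * B2" unfolding abs_mult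
        by (intro mult_mono Bu B2 Bu0) auto
    qed
    have i2: "integrable (intv 0 3) (\<lambda>x. g x * \<psi> x)"
    proof (rule integrable_intv_bound[where B="Bg * B1"])
      show "(\<lambda>x. g x * \<psi> x) \<in> borel_measurable borel"
        by (intro borel_measurable_times mg test_meas[OF t])
      fix x :: real assume "0 < x" "x < 3"
      then show "\<bar>g x * \<psi> x\<bar> \<le> Bg * B1" unfolding abs_mult
        by (intro mult_mono Bg B1 Bg0) auto
    qed
    have D: "\<And>x. DERIV \<psi> x :> deriv \<psi> x" using test_DERIV[OF t] .
    have cp: "continuous_on S \<psi>" "continuous_on S (deriv \<psi>)" for S
      using test_cont[OF t] test_deriv_cont[OF t] by auto
    have f: "integrable (intv 0 3) (\<lambda>x. u x * deriv \<psi> x + g x * \<psi> x) \<and>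
      (\<integral>x. u x * deriv \<psi> x + g x * \<psi> x \<partial>intv 0 3) =
      (U1 1 * \<psi> 1 - U1 0 * \<psi> 0) + (U2 2 * \<psi> 2 - U2 1 * \<psi> 1) + (U3 3 * \<psi> 3 - U3 2 * \<psi> 2)"
    proof (rule ftc3[where ?F1.0="\<lambda>x. U1 x * \<psi> x" and ?F2.0="\<lambda>x. U2 x * \<psi> x" and ?F3.0="\<lambda>x. U3 x * \<psi> x"
          and ?f1.0="\<lambda>x. G1 x * \<psi> x + deriv \<psi> x * U1 x" and ?f2.0="\<lambda>x. G2 x * \<psi> x + deriv \<psi> x * U2 x"
          and ?f3.0="\<lambda>x. G3 x * \<psi> x + deriv \<psi> x * U3 x"])
      show "((\<lambda>x. U1 x * \<psi> x) has_real_derivative G1 x * \<psi> x + deriv \<psi> x * U1 x) (at x)" if "0 \<le> x" "x \<le> 1" for x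
        using DERIV_mult[OF d1[OF that] D] .
      show "((\<lambda>x. U2 x * \<psi> x) has_real_derivative G2 x * \<psi> x + deriv \<psi> x * U2 x) (at x)" if "1 \<le> x" "x \<le> 2" for x
        using DERIV_mult[OF d2[OF that] D] .
      show "((\<lambda>x. U3 x * \<psi> x) has_real_derivative G3 x * \<psi> x + deriv \<psi> x * U3 x) (at x)" if "2 \<le> x" "x \<le> 3" for x
        using DERIV_mult[OF d3[OF that] D] .
      show "continuous_on {0..1} (\<lambda>x. G1 x * \<psi> x + deriv \<psi> x * U1 x)"
        using c1 cU1 cp(1)[of "{0..1}"] cp(2)[of "{0..1}"] by (intro continuous_on_add continuous_on_mult)
      show "continuous_on {1..2} (\<lambda>x. G2 x * \<psi> x + deriv \<psi> x * U2 x)"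
        using c2 cU2 cp(1)[of "{1..2}"] cp(2)[of "{1..2}"] by (intro continuous_on_add continuous_on_mult)
      show "continuous_on {2..3} (\<lambda>x. G3 x * \<psi> x + deriv \<psi> x * U3 x)"
        using c3 cU3 cp(1)[of "{2..3}"] cp(2)[of "{2..3}"] by (intro continuous_on_add continuous_on_mult)
      show "(\<lambda>x. u x * deriv \<psi> x + g x * \<psi> x) \<in> borel_measurable borel"
        by (intro borel_measurable_add borel_measurable_times mu mg test_meas[OF t] test_deriv_meas[OF t])
      show "u x * deriv \<psi> x + g x * \<psi> x = G1 x * \<psi> x + deriv \<psi> x * U1 x" if "0 < x" "x < 1" for x
        using that by (simp add: u1 g1 algebra_simps)
      show "u x * deriv \<psi> x + g x * \<psi> x = G2 x * \<psi> x + deriv \<psi> x * U2 x" if "1 < x" "x < 2" for x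
        using that by (simp add: u2 g2 algebra_simps)
      show "u x * deriv \<psi> x + g x * \<psi> x = G3 x * \<psi> x + deriv \<psi> x * U3 x" if "2 < x" "x < 3" for x
        using that by (simp add: u3 g3 algebra_simps)
    qed
    have "(\<integral>x. u x * deriv \<psi> x + g x * \<psi> x \<partial>intv 0 3) = 0"
      using f test_boundary[OF t] m12 m23 by simp
    then show ?thesis using i1 i2 by simp
  qed
  show ?thesis unfolding weak_deriv_def using iu ig main by blast
qed

lemma taylor2:
  fixes g g' g'' :: "real \<Rightarrow> real"
  assumes d: "\<And>x. c \<le> x \<Longrightarrow> x \<le> c + h \<Longrightarrow> DERIV g x :> g' x"
    and d': "\<And>x. c \<le> x \<Longrightarrow> x \<le> c + h \<Longrightarrow> DERIV g' x :> g'' x"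
    and b: "\<And>x. c \<le> x \<Longrightarrow> x \<le> c + h \<Longrightarrow> \<bar>g'' x\<bar> \<le> C"
    and z: "g c = 0" "g' c = 0"
    and x: "c \<le> x" "x \<le> c + h"
  shows "\<bar>g' x\<bar> \<le> C * (x - c) \<and> \<bar>g x\<bar> \<le> C * (x - c)\<^sup>2"
proof -
  have g1: "\<bar>g' y\<bar> \<le> C * (y - c)" if "c \<le> y" "y \<le> c + h" for y
  proof (cases "y = c")
    case True then show ?thesis using z by simp
  next
    case False
    then have "c < y" using that by simp
    have "\<exists>z. c < z \<and> z < y \<and> g' y - g' c = (y - c) * g'' z"
      by (rule MVT2[OF \<open>c < y\<close>]) (use d' that in auto)
    then obtain z where "c < z" "z < y" "g' y - g' c = (y - c) * g'' z" by blast
    moreover have "\<bar>g'' z\<bar> \<le> C" using b \<open>c < z\<close> \<open>z < y\<close> that by simp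
    ultimately show ?thesis using z \<open>c < y\<close> by (simp add: abs_mult mult.commute mult_left_mono)
  qed
  have C0: "C \<ge> 0" using b[of c] x by simp
  have "\<bar>g x\<bar> \<le> C * (x - c)\<^sup>2"
  proof (cases "x = c")
    case True then show ?thesis using z by simp
  next
    case False
    then have "c < x" using x by simp
    have "\<exists>y. c < y \<and> y < x \<and> g x - g c = (x - c) * g' y"
      by (rule MVT2[OF \<open>c < x\<close>]) (use d x in auto)
    then obtain y where y: "c < y" "y < x" "g x - g c = (x - c) * g' y" by blast
    have "\<bar>g' y\<bar> \<le> C * (y - c)" using g1 y x by simp
    also have "\<dots> \<le> C * (x - c)" using y C0 by (simp add: mult_left_mono)
    finally have "\<bar>g x\<bar> \<le> (x - c) * (C * (x - c))"
      using y z \<open>c < x\<close> by (simp add: abs_mult mult_left_mono)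
    then show ?thesis by (simp add: power2_eq_square mult_ac)
  qed
  then show ?thesis using g1 x by simp
qed


locale sol =
  fixes a s B :: real
  assumes a1: "1 \<le> a" and s1: "pi / 2 \<le> s" and s2: "s < pi"
    and hB: "B * sin s = a + ln (1 + a)" and hc: "- B * s * cos s = a / (1 + a)"
begin

definition "F2 x = a + ln (a * x + (1 - a))"
definition "dF2 x = a / (a * x + (1 - a))"
definition "ddF2 x = - (a / (a * x + (1 - a)))\<^sup>2"
definition "F3 x = B * sin ((- s) * x + 3 * s)"
definition "dF3 x = - B * s * cos ((- s) * x + 3 * s)"
definition "ddF3 x = - s\<^sup>2 * (B * sin ((- s) * x + 3 * s))"

definition "uu x = (if x \<le> 1 then a * x else if x \<le> 2 then F2 x else F3 x)"
definition "du x = (if x \<le> 1 then a else if x \<le> 2 then dF2 x else dF3 x)"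
definition "ddu x = - (indicator {1<..<2} x * (du x)\<^sup>2 + s\<^sup>2 * (indicator {2<..<3} x * uu x))"

lemma s_pos: "s > 0" using s1 pi_gt_zero by linarith
lemma sin_s_pos: "sin s > 0"
proof -
  have "0 < s" "s < pi" using s_pos s2 by linarith+
  then show ?thesis by (rule sin_gt_zero)
qed
lemma B_pos: "B > 0"
proof -
  have "ln (1 + a) \<ge> 0" using a1 by simp
  then have p: "a + ln (1 + a) > 0" using a1 by linarith
  have "B = (a + ln (1 + a)) / sin s" using hB sin_s_pos by (simp add: eq_divide_eq)
  then show ?thesis using p sin_s_pos by simp
qed

lemma arg_pos: "a * x + (1 - a) > 0" if "x > 1 - 1 / (2 * a)"
proof -
  have "a * x > a * (1 - 1 / (2 * a))" using that a1 by (intro mult_strict_left_mono) auto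
  also have "a * (1 - 1 / (2 * a)) = a - a * (1 / (2 * a))" by (simp add: right_diff_distrib)
  also have "a * (1 / (2 * a)) = 1 / 2" using a1 by simp
  finally show ?thesis by simp
qed

lemma arg_pos1: "x \<ge> 1 \<Longrightarrow> a * x + (1 - a) \<ge> 1"
proof -
  assume "x \<ge> 1"
  then have "a * 1 \<le> a * x" using a1 by (intro mult_left_mono) auto
  then show ?thesis by simp
qed

lemma F2_D: "a * x + (1 - a) > 0 \<Longrightarrow> DERIV F2 x :> dF2 x"
  unfolding F2_def[abs_def] dF2_def by (auto intro!: derivative_eq_intros simp: field_simps)

lemma dF2_D: "a * x + (1 - a) > 0 \<Longrightarrow> DERIV dF2 x :> ddF2 x"
  unfolding dF2_def[abs_def] ddF2_def by (auto intro!: derivative_eq_intros simp: field_simps power2_eq_square)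

lemma F3_D: "DERIV F3 x :> dF3 x"
  unfolding F3_def[abs_def] dF3_def by (auto intro!: derivative_eq_intros simp: field_simps)

lemma dF3_D: "DERIV dF3 x :> ddF3 x"
  unfolding dF3_def[abs_def] ddF3_def by (auto intro!: derivative_eq_intros simp: field_simps power2_eq_square)

lemma F2_1: "F2 1 = a" by (simp add: F2_def)
lemma dF2_1: "dF2 1 = a" by (simp add: dF2_def)
lemma F23: "F2 2 = F3 2"
proof -
  have 1: "a * 2 + (1 - a) = 1 + a" by simp
  have 2: "- s * 2 + 3 * s = s" by simp
  show ?thesis unfolding F2_def F3_def 1 2 hB ..
qed
lemma dF23: "dF2 2 = dF3 2"
proof -
  have 1: "a * 2 + (1 - a) = 1 + a" by simp
  have 2: "- s * 2 + 3 * s = s" by simp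
  show ?thesis unfolding dF2_def dF3_def 1 2 hc ..
qed

lemma cont_ddF2: "continuous_on {1..2} ddF2"
proof -
  have "\<forall>x\<in>{1..2}. a * x + (1 - a) \<noteq> 0" using arg_pos1 by force
  then show ?thesis unfolding ddF2_def[abs_def] by (intro continuous_intros) auto
qed

lemma cont_dF2: "continuous_on {1..2} dF2"
  by (rule DERIV_atLeastAtMost_imp_continuous_on) (use dF2_D arg_pos1 in \<open>force\<close>)
lemma cont_F2: "continuous_on {1..2} F2"
  by (rule DERIV_atLeastAtMost_imp_continuous_on) (use F2_D arg_pos1 in \<open>force\<close>)
lemma cont_dF3: "continuous_on S dF3"
  using F3_D dF3_D by (meson DERIV_continuous_on has_field_derivative_at_within)
lemma cont_F3: "continuous_on S F3"
  using F3_D by (meson DERIV_continuous_on has_field_derivative_at_within)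
lemma cont_ddF3: "continuous_on S ddF3"
  unfolding ddF3_def by (intro continuous_intros)

lemma meas_uu: "uu \<in> borel_measurable borel"
  unfolding uu_def[abs_def] F2_def F3_def by measurable
lemma meas_du: "du \<in> borel_measurable borel"
  unfolding du_def[abs_def] dF2_def dF3_def by measurable
lemma meas_ddu: "ddu \<in> borel_measurable borel"
  unfolding ddu_def[abs_def] using meas_du meas_uu by measurable

lemma bnd_uu: "\<exists>C. \<forall>x. 0 < x \<longrightarrow> x < 3 \<longrightarrow> \<bar>uu x\<bar> \<le> C"
proof (rule bound3[where ?f1.0="\<lambda>x. a * x" and ?f2.0=F2 and ?f3.0=F3])
  show "continuous_on {0..1} (\<lambda>x. a * x)" by (intro continuous_intros)
qed (auto simp: uu_def cont_F2 cont_F3)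
lemma bnd_du: "\<exists>C. \<forall>x. 0 < x \<longrightarrow> x < 3 \<longrightarrow> \<bar>du x\<bar> \<le> C"
proof (rule bound3[where ?f1.0="\<lambda>x. a" and ?f2.0=dF2 and ?f3.0=dF3])
  show "continuous_on {0..1} (\<lambda>x. a)" by (intro continuous_intros)
qed (auto simp: du_def cont_dF2 cont_dF3)
lemma bnd_ddu: "\<exists>C. \<forall>x. 0 < x \<longrightarrow> x < 3 \<longrightarrow> \<bar>ddu x\<bar> \<le> C"
proof -
  obtain C1 where C1: "\<forall>x. 0 < x \<longrightarrow> x < 3 \<longrightarrow> \<bar>uu x\<bar> \<le> C1" using bnd_uu by blast
  obtain C2 where C2: "\<forall>x. 0 < x \<longrightarrow> x < 3 \<longrightarrow> \<bar>du x\<bar> \<le> C2" using bnd_du by blast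
  have "\<bar>ddu x\<bar> \<le> C2\<^sup>2 + s\<^sup>2 * C1" if "0 < x" "x < 3" for x
  proof -
    have "\<bar>ddu x\<bar> \<le> indicator {1<..<2} x * (du x)\<^sup>2 + s\<^sup>2 * (indicator {2<..<3} x * \<bar>uu x\<bar>)"
      unfolding ddu_def by (auto simp: indicator_def abs_mult)
    also have "\<dots> \<le> C2\<^sup>2 + s\<^sup>2 * C1"
    proof (intro add_mono mult_left_mono)
      have "\<bar>du x\<bar> \<le> C2" using C2 that by blast
      then have "\<bar>du x\<bar>\<^sup>2 \<le> C2\<^sup>2" by (rule power_mono) simp
      then have "(du x)\<^sup>2 \<le> C2\<^sup>2" by simp
      then show "indicator {1<..<2} x * (du x)\<^sup>2 \<le> C2\<^sup>2" by (auto simp: indicator_def)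
      show "indicator {2<..<3} x * \<bar>uu x\<bar> \<le> C1" using C1 that by (auto simp: indicator_def)
    qed auto
    finally show ?thesis .
  qed
  then show ?thesis by blast
qed

lemma wd_uu: "weak_deriv 0 3 uu du"
proof (rule weak3[where ?U1.0="\<lambda>x. a * x" and ?G1.0="\<lambda>x. a" and ?U2.0=F2 and ?G2.0=dF2 and ?U3.0=F3 and ?G3.0=dF3])
  show "((\<lambda>x. a * x) has_real_derivative a) (at x)" for x by (auto intro!: derivative_eq_intros)
  show "(F2 has_real_derivative dF2 x) (at x)" if "1 \<le> x" "x \<le> 2" for x
    using F2_D arg_pos1[OF that(1)] by simp
  show "continuous_on {0..1} (\<lambda>x. a)" by (intro continuous_intros)
  show "\<exists>C. \<forall>x. 0 < x \<longrightarrow> x < 3 \<longrightarrow> \<bar>du x\<bar> \<le> C" by (rule bnd_du)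
qed (auto simp: uu_def du_def F2_1 F23 F3_D cont_dF2 cont_dF3 meas_uu meas_du)

lemma wd_du: "weak_deriv 0 3 du ddu"
proof (rule weak3[where ?U1.0="\<lambda>x. a" and ?G1.0="\<lambda>x. 0" and ?U2.0=dF2 and ?G2.0=ddF2 and ?U3.0=dF3 and ?G3.0=ddF3])
  show "(dF2 has_real_derivative ddF2 x) (at x)" if "1 \<le> x" "x \<le> 2" for x
    using dF2_D arg_pos1[OF that(1)] by simp
  show "ddu x = ddF2 x" if "1 < x" "x < 2" for x
    using that by (auto simp: ddu_def du_def ddF2_def dF2_def)
  show "ddu x = ddF3 x" if "2 < x" "x < 3" for x
    using that by (auto simp: ddu_def uu_def ddF3_def F3_def)
  show "continuous_on {0..1} (\<lambda>x. 0::real)" by (intro continuous_intros)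
  show "\<exists>C. \<forall>x. 0 < x \<longrightarrow> x < 3 \<longrightarrow> \<bar>ddu x\<bar> \<le> C" by (rule bnd_ddu)
qed (auto simp: ddu_def du_def dF2_1 dF23 dF3_D cont_ddF2 cont_ddF3 meas_ddu meas_du)

lemma L2_bnd:
  assumes "f \<in> borel_measurable borel" "\<exists>C. \<forall>x. 0 < x \<longrightarrow> x < 3 \<longrightarrow> \<bar>f x\<bar> \<le> C"
  shows "L2 0 3 f"
proof -
  obtain C where C: "\<And>x. 0 < x \<Longrightarrow> x < 3 \<Longrightarrow> \<bar>f x\<bar> \<le> C" using assms(2) by blast
  have "integrable (intv 0 3) (\<lambda>x. (f x)\<^sup>2)"
  proof (rule integrable_intv_bound[where B="C\<^sup>2"])
    show "(\<lambda>x. (f x)\<^sup>2) \<in> borel_measurable borel" using assms(1) by measurable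
    fix x :: real assume "0 < x" "x < 3"
    then have "\<bar>f x\<bar> \<le> C" by (rule C)
    then have "\<bar>f x\<bar>\<^sup>2 \<le> C\<^sup>2" by (rule power_mono) simp
    then show "\<bar>(f x)\<^sup>2\<bar> \<le> C\<^sup>2" by simp
  qed
  then show ?thesis unfolding L2_def using meas_intv[OF assms(1)] by blast
qed

lemma L2_uu: "L2 0 3 uu" by (rule L2_bnd[OF meas_uu bnd_uu])
lemma L2_du: "L2 0 3 du" by (rule L2_bnd[OF meas_du bnd_du])
lemma L2_ddu: "L2 0 3 ddu" by (rule L2_bnd[OF meas_ddu bnd_ddu])

lemma H1_du: "H1 0 3 du" unfolding H1_def using L2_du L2_ddu wd_du by blast
lemma H2_uu: "H2 0 3 uu" unfolding H2_def using L2_uu H1_du wd_uu by blast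

lemma Linf_uu: "Linf 0 3 uu"
proof -
  obtain C where C: "\<And>x. 0 < x \<Longrightarrow> x < 3 \<Longrightarrow> \<bar>uu x\<bar> \<le> C" using bnd_uu by blast
  have "Linf_norm 0 3 uu \<le> ereal C"
    unfolding Linf_norm_def
    by (rule esssup_I) (use meas_intv[OF meas_uu] C in \<open>auto intro!: AE_intv\<close>)
  moreover have "ereal C < \<infinity>" by simp
  ultimately have "Linf_norm 0 3 uu < \<infinity>" by (rule le_less_trans)
  then show ?thesis unfolding Linf_def using meas_intv[OF meas_uu] by blast
qed

lemma uu_ge: "3/2 < x \<Longrightarrow> x \<le> 2 \<Longrightarrow> uu x \<ge> a"
proof -
  assume x: "3/2 < x" "x \<le> 2"
  then have "a * x + (1 - a) \<ge> 1" using arg_pos1 by simp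
  then have "ln (a * x + (1 - a)) \<ge> 0" by simp
  then show ?thesis using x by (simp add: uu_def F2_def)
qed

lemma Linf_norm_ge: "Linf_norm 0 3 uu \<ge> ereal a"
proof (rule ccontr)
  assume "\<not> ereal a \<le> Linf_norm 0 3 uu"
  then have lt: "Linf_norm 0 3 uu < ereal a" by simp
  have "AE x in intv 0 3. ereal \<bar>uu x\<bar> \<le> Linf_norm 0 3 uu"
    unfolding Linf_norm_def by (rule esssup_AE)
  then have "AE x in intv 0 3. x \<notin> {3/2<..<2}"
  proof eventually_elim
    case (elim x)
    show ?case
    proof
      assume "x \<in> {3/2<..<2}"
      then have "uu x \<ge> a" using uu_ge by simp
      then have "ereal a \<le> ereal \<bar>uu x\<bar>" by simp
      from order_trans[OF this elim] lt show False by simp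
    qed
  qed
  then have "emeasure (intv 0 3) {3/2<..<2} = 0"
  proof (subst (asm) AE_iff_measurable[where N="{3/2<..<2}"])
    show "{3/2<..<2::real} \<in> sets (intv 0 3)" unfolding intv_def by (auto simp: sets_restrict_space_iff)
    show "{x \<in> space (intv 0 3). \<not> x \<notin> {3 / 2<..<2::real}} = {3/2<..<2}" by (auto simp: space_intv)
  qed
  moreover have "emeasure (intv 0 3) {3/2<..<2} = ennreal (1/2)"
    unfolding intv_def by (subst emeasure_restrict_space) auto
  ultimately show False by simp
qed

end


lemma sig_lo: "0 < d \<Longrightarrow> y \<le> c \<Longrightarrow> sig ((y - c) / d) = 0"
  by (rule sig_0) (simp add: divide_nonpos_pos)
lemma sig_hi: "0 < d \<Longrightarrow> c + d \<le> y \<Longrightarrow> sig ((y - c) / d) = 1"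
  by (rule sig_1) (simp add: le_divide_eq)
lemma dsig_lo: "0 < d \<Longrightarrow> y < c \<Longrightarrow> deriv sig ((y - c) / d) = 0"
  by (rule dsig_0) (simp add: divide_neg_pos)
lemma dsig_hi: "0 < d \<Longrightarrow> c + d < y \<Longrightarrow> deriv sig ((y - c) / d) = 0"
  by (rule dsig_0) (simp add: less_divide_eq)
lemma sig_lo': "0 < d \<Longrightarrow> c \<le> y \<Longrightarrow> sig ((c - y) / d) = 0"
  by (rule sig_0) (simp add: divide_nonpos_pos)
lemma sig_hi': "0 < d \<Longrightarrow> y \<le> c - d \<Longrightarrow> sig ((c - y) / d) = 1"
  by (rule sig_1) (simp add: le_divide_eq)
lemma dsig_hi': "0 < d \<Longrightarrow> y < c - d \<Longrightarrow> deriv sig ((c - y) / d) = 0"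
  by (rule dsig_0) (simp add: less_divide_eq)

lemma sig_D1: "0 < d \<Longrightarrow> DERIV (\<lambda>y. sig ((y - c) / d)) x :> deriv sig ((x - c) / d) * (1 / d)"
proof -
  assume "0 < d"
  have i: "DERIV (\<lambda>y. (y - c) / d) x :> 1 / d" using \<open>0 < d\<close> by (auto intro!: derivative_eq_intros)
  show ?thesis using DERIV_chain2[OF sig_DERIV i] .
qed
lemma sig_D2: "0 < d \<Longrightarrow> DERIV (\<lambda>y. sig ((c - y) / d)) x :> deriv sig ((c - x) / d) * (- 1 / d)"
proof -
  assume "0 < d"
  have i: "DERIV (\<lambda>y. (c - y) / d) x :> - 1 / d" using \<open>0 < d\<close> by (auto intro!: derivative_eq_intros)
  show ?thesis using DERIV_chain2[OF sig_DERIV i] .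
qed

lemma Con_sig1: "0 < d \<Longrightarrow> Con UNIV k (\<lambda>y. sig ((y - c) / d))"
proof -
  assume d: "0 < d"
  have "Con {x. (1/d) * x + (- c / d) \<in> UNIV} k (\<lambda>y. sig ((1/d) * y + (- c / d)))"
    by (rule Con_affine[OF open_UNIV Con_sig])
  moreover have "(\<lambda>y. sig ((1/d) * y + (- c / d))) = (\<lambda>y. sig ((y - c) / d))"
    by (rule ext) (simp add: diff_divide_distrib)
  ultimately show ?thesis by simp
qed
lemma Con_sig2: "0 < d \<Longrightarrow> Con UNIV k (\<lambda>y. sig ((c - y) / d))"
proof -
  assume d: "0 < d"
  have "Con {x. (-1/d) * x + (c / d) \<in> UNIV} k (\<lambda>y. sig ((-1/d) * y + (c / d)))"
    by (rule Con_affine[OF open_UNIV Con_sig])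
  moreover have "(\<lambda>y. sig ((-1/d) * y + (c / d))) = (\<lambda>y. sig ((c - y) / d))"
    by (rule ext) (simp add: diff_divide_distrib)
  ultimately show ?thesis by simp
qed

context sol
begin

definition "D12 x = F2 x - a * x"
definition "dD12 x = dF2 x - a"
definition "D23 x = F3 x - F2 x"
definition "dD23 x = dF3 x - dF2 x"
definition "phi d x = sig ((x - d) / d) * sig ((3 - d - x) / d) *
   (a * x + sig ((x - 1) / d) * D12 x + sig ((x - 2) / d) * D23 x)"

definition "V2 = {1 - 1 / (2 * a)<..}"

lemma oV2: "open V2" by (simp add: V2_def)
lemma V2_arg: "x \<in> V2 \<Longrightarrow> a * x + (1 - a) > 0" using arg_pos by (simp add: V2_def)
lemma V2_half: "x \<in> V2 \<Longrightarrow> x > 1/2"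
proof -
  assume "x \<in> V2"
  moreover have "1 / (2 * a) \<le> 1 / 2" using a1 by (simp add: field_simps)
  ultimately show ?thesis by (simp add: V2_def)
qed
lemma V2_UN: "{..<1} \<union> V2 = UNIV"
proof -
  have pos: "1 / (2 * a) > 0" using a1 by simp
  have "x \<in> {..<1} \<union> V2" for x
  proof (cases "x < 1")
    case False
    then have "1 - 1 / (2 * a) < x" using pos by linarith
    then show ?thesis by (simp add: V2_def)
  qed simp
  then show ?thesis by blast
qed

lemma Con_F2: "Con V2 k F2"
proof -
  have "Con {x. a * x + (1 - a) \<in> {0<..}} k (\<lambda>x. ln (a * x + (1 - a)))"
    by (rule Con_affine[OF open_greaterThan Con_ln])
  then have "Con V2 k (\<lambda>x. ln (a * x + (1 - a)))" by (rule Con_subset) (use V2_arg in auto)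
  then have "Con V2 k (\<lambda>x. a + ln (a * x + (1 - a)))" by (rule Con_add[OF oV2 Con_const])
  then show ?thesis by (simp add: F2_def[abs_def])
qed

lemma Con_F3: "Con U k F3"
proof -
  have "Con {x. (- s) * x + 3 * s \<in> UNIV} k (\<lambda>x. sin ((- s) * x + 3 * s))"
    by (rule Con_affine[OF open_UNIV]) (use Con_sin_cos in blast)
  then have "Con UNIV k (\<lambda>x. B * sin ((- s) * x + 3 * s))" by (intro Con_cmult) auto
  then have "Con UNIV k F3" by (simp add: F3_def[abs_def])
  then show ?thesis by (rule Con_subset) simp
qed

lemma Con_D12: "Con V2 k D12"
proof -
  have "Con V2 k (\<lambda>x. F2 x - a * x)" by (intro Con_diff oV2 Con_F2 Con_cmult Con_id)
  then show ?thesis by (simp add: D12_def[abs_def])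
qed
lemma Con_D23: "Con V2 k D23"
proof -
  have "Con V2 k (\<lambda>x. F3 x - F2 x)" by (intro Con_diff oV2 Con_F2 Con_F3)
  then show ?thesis by (simp add: D23_def[abs_def])
qed

lemma D12_D: "x \<in> V2 \<Longrightarrow> DERIV D12 x :> dD12 x"
proof -
  assume "x \<in> V2"
  then have "DERIV F2 x :> dF2 x" using F2_D V2_arg by blast
  then have "DERIV (\<lambda>x. F2 x - a * x) x :> dF2 x - a" by (auto intro!: derivative_eq_intros)
  then show ?thesis by (simp add: D12_def[abs_def] dD12_def)
qed

lemma D23_D: "x \<in> V2 \<Longrightarrow> DERIV D23 x :> dD23 x"
proof -
  assume "x \<in> V2"
  then have "DERIV F2 x :> dF2 x" using F2_D V2_arg by blast
  then have "DERIV (\<lambda>x. F3 x - F2 x) x :> dF3 x - dF2 x" using F3_D by (auto intro!: derivative_eq_intros)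
  then show ?thesis by (simp add: D23_def[abs_def] dD23_def)
qed

context
  fixes d :: real
  assumes d0: "0 < d" and d4: "d \<le> 1/4"
begin

lemma phi_V1: "y < 1 \<Longrightarrow> phi d y = sig ((y - d) / d) * sig ((3 - d - y) / d) * (a * y)"
  using sig_lo[OF d0, of y 1] sig_lo[OF d0, of y 2] by (simp add: phi_def)

lemma Con_phi: "Con UNIV k (phi d)"
proof -
  have sL: "Con U k (\<lambda>y. sig ((y - d) / d))" for U using Con_subset[OF Con_sig1[OF d0]] by blast
  have sR: "Con U k (\<lambda>y. sig ((3 - d - y) / d))" for U using Con_subset[OF Con_sig2[OF d0]] by blast
  have s1: "Con U k (\<lambda>y. sig ((y - 1) / d))" for U using Con_subset[OF Con_sig1[OF d0]] by blast
  have s2: "Con U k (\<lambda>y. sig ((y - 2) / d))" for U using Con_subset[OF Con_sig1[OF d0]] by blast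
  have ax: "Con U k (\<lambda>y. a * y)" if "open U" for U by (intro Con_cmult that Con_id)
  have "Con {..<1} k (\<lambda>y. sig ((y - d) / d) * sig ((3 - d - y) / d) * (a * y))"
    by (intro Con_mult open_lessThan sL sR ax)
  then have 1: "Con {..<1} k (phi d)" using Con_cong[OF open_lessThan, of 1 "phi d"] phi_V1 by simp
  have "Con V2 k (\<lambda>y. sig ((y - d) / d) * sig ((3 - d - y) / d) *
     (a * y + sig ((y - 1) / d) * D12 y + sig ((y - 2) / d) * D23 y))"
    by (intro Con_mult Con_add oV2 sL sR ax s1 s2 Con_D12 Con_D23)
  then have 2: "Con V2 k (phi d)" by (simp add: phi_def[abs_def])
  show ?thesis using Con_Un[OF 1 2] V2_UN by simp
qed

lemma phi_zero: "y \<notin> {d..3-d} \<Longrightarrow> phi d y = 0"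
proof -
  assume "y \<notin> {d..3-d}"
  then consider "y < d" | "y > 3 - d" by force
  then show ?thesis
  proof cases
    case 1 then show ?thesis using sig_lo[OF d0, of y d] by (simp add: phi_def)
  next
    case 2 then show ?thesis using sig_lo'[OF d0, of "3 - d" y] by (simp add: phi_def)
  qed
qed

lemma test_phi: "test_fun 0 3 (phi d)"
  unfolding test_fun_def
proof (intro conjI)
  show "\<forall>k x. (deriv ^^ k) (phi d) differentiable (at x)"
  proof (intro allI)
    fix k :: nat and x :: real
    show "(deriv ^^ k) (phi d) differentiable (at x)"
      using Con_test[OF Con_phi[of "Suc k"], of k x] by simp
  qed
  show "\<exists>K. compact K \<and> K \<subseteq> {0<..<3} \<and> (\<forall>x. x \<notin> K \<longrightarrow> phi d x = 0)"
    by (rule exI[of _ "{d..3-d}"]) (use d0 phi_zero in auto)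
qed

lemma phi_A: "y < 1 \<Longrightarrow> phi d y = sig ((y - d) / d) * (a * y)"
  using phi_V1 sig_hi'[OF d0, of y "3 - d"] d4 by simp

lemma phi_B: "1 - 1 / (2 * a) < y \<Longrightarrow> y < 2 \<Longrightarrow> phi d y = a * y + sig ((y - 1) / d) * D12 y"
proof -
  assume y: "1 - 1 / (2 * a) < y" "y < 2"
  then have "y > 1/2" using V2_half by (simp add: V2_def)
  then have "sig ((y - d) / d) = 1" using sig_hi[OF d0, of d y] d4 by simp
  moreover have "sig ((3 - d - y) / d) = 1" using sig_hi'[OF d0, of y "3 - d"] d4 y by simp
  moreover have "sig ((y - 2) / d) = 0" using sig_lo[OF d0, of y 2] y by simp
  ultimately show ?thesis by (simp add: phi_def)
qed

lemma phi_C: "3/2 < y \<Longrightarrow> y < 5/2 \<Longrightarrow> phi d y = F2 y + sig ((y - 2) / d) * D23 y"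
proof -
  assume y: "3/2 < y" "y < 5/2"
  have "sig ((y - d) / d) = 1" using sig_hi[OF d0, of d y] d4 y by simp
  moreover have "sig ((3 - d - y) / d) = 1" using sig_hi'[OF d0, of y "3 - d"] d4 y by simp
  moreover have "sig ((y - 1) / d) = 1" using sig_hi[OF d0, of 1 y] d4 y by simp
  ultimately show ?thesis by (simp add: phi_def D12_def)
qed

lemma phi_D: "9/4 < y \<Longrightarrow> phi d y = sig ((3 - d - y) / d) * F3 y"
proof -
  assume y: "9/4 < y"
  have "sig ((y - d) / d) = 1" using sig_hi[OF d0, of d y] d4 y by simp
  moreover have "sig ((y - 1) / d) = 1" using sig_hi[OF d0, of 1 y] d4 y by simp
  moreover have "sig ((y - 2) / d) = 1" using sig_hi[OF d0, of 2 y] d4 y by simp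
  ultimately show ?thesis by (simp add: phi_def D12_def D23_def)
qed

lemma dphi_A: "x < 1 \<Longrightarrow> deriv (phi d) x = deriv sig ((x - d) / d) * (1 / d) * (a * x) + a * sig ((x - d) / d)"
proof -
  assume x: "x < 1"
  have D: "DERIV (\<lambda>y. sig ((y - d) / d) * (a * y)) x :> deriv sig ((x - d) / d) * (1 / d) * (a * x) + a * sig ((x - d) / d)"
    using DERIV_mult[OF sig_D1[OF d0] DERIV_cmult[OF DERIV_ident, of a]] by simp
  have "DERIV (phi d) x :> deriv sig ((x - d) / d) * (1 / d) * (a * x) + a * sig ((x - d) / d)"
    by (rule has_field_derivative_transform_within_open[OF D, of "{..<1}"]) (use x phi_A in auto)
  then show ?thesis by (rule DERIV_imp_deriv)
qed

lemma dphi_B: "1 - 1 / (2 * a) < x \<Longrightarrow> x < 2 \<Longrightarrow>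
  deriv (phi d) x = a + (deriv sig ((x - 1) / d) * (1 / d) * D12 x + dD12 x * sig ((x - 1) / d))"
proof -
  assume x: "1 - 1 / (2 * a) < x" "x < 2"
  then have "x \<in> V2" by (simp add: V2_def)
  have D: "DERIV (\<lambda>y. a * y + sig ((y - 1) / d) * D12 y) x :>
     a + (deriv sig ((x - 1) / d) * (1 / d) * D12 x + dD12 x * sig ((x - 1) / d))"
    using DERIV_add[OF DERIV_cmult[OF DERIV_ident] DERIV_mult[OF sig_D1[OF d0] D12_D[OF \<open>x \<in> V2\<close>]], of a] by simp
  have "DERIV (phi d) x :> a + (deriv sig ((x - 1) / d) * (1 / d) * D12 x + dD12 x * sig ((x - 1) / d))"
    by (rule has_field_derivative_transform_within_open[OF D, of "{1 - 1 / (2 * a)<..<2}"]) (use x phi_B in auto)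
  then show ?thesis by (rule DERIV_imp_deriv)
qed

lemma dphi_C: "3/2 < x \<Longrightarrow> x < 5/2 \<Longrightarrow>
  deriv (phi d) x = dF2 x + (deriv sig ((x - 2) / d) * (1 / d) * D23 x + dD23 x * sig ((x - 2) / d))"
proof -
  assume x: "3/2 < x" "x < 5/2"
  have pos: "1 / (2 * a) > 0" using a1 by simp
  have "1 - 1 / (2 * a) < x" using pos x by linarith
  then have "x \<in> V2" by (simp add: V2_def)
  have "DERIV F2 x :> dF2 x" using F2_D V2_arg \<open>x \<in> V2\<close> by blast
  then have D: "DERIV (\<lambda>y. F2 y + sig ((y - 2) / d) * D23 y) x :>
     dF2 x + (deriv sig ((x - 2) / d) * (1 / d) * D23 x + dD23 x * sig ((x - 2) / d))"
    by (rule DERIV_add[OF _ DERIV_mult[OF sig_D1[OF d0] D23_D[OF \<open>x \<in> V2\<close>]]])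
  have "DERIV (phi d) x :> dF2 x + (deriv sig ((x - 2) / d) * (1 / d) * D23 x + dD23 x * sig ((x - 2) / d))"
    by (rule has_field_derivative_transform_within_open[OF D, of "{3/2<..<5/2}"]) (use x phi_C in auto)
  then show ?thesis by (rule DERIV_imp_deriv)
qed

lemma dphi_D: "9/4 < x \<Longrightarrow>
  deriv (phi d) x = deriv sig ((3 - d - x) / d) * (- 1 / d) * F3 x + dF3 x * sig ((3 - d - x) / d)"
proof -
  assume x: "9/4 < x"
  have D: "DERIV (\<lambda>y. sig ((3 - d - y) / d) * F3 y) x :>
     deriv sig ((3 - d - x) / d) * (- 1 / d) * F3 x + dF3 x * sig ((3 - d - x) / d)"
    by (rule DERIV_mult[OF sig_D2[OF d0] F3_D])
  have "DERIV (phi d) x :> deriv sig ((3 - d - x) / d) * (- 1 / d) * F3 x + dF3 x * sig ((3 - d - x) / d)"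
    by (rule has_field_derivative_transform_within_open[OF D, of "{9/4<..}"]) (use x phi_D in auto)
  then show ?thesis by (rule DERIV_imp_deriv)
qed

end

end


lemma abs_mult_le: "\<bar>p\<bar> \<le> P \<Longrightarrow> \<bar>q\<bar> \<le> Q \<Longrightarrow> \<bar>p * q\<bar> \<le> P * (Q::real)"
  unfolding abs_mult by (rule mult_mono) auto

context sol
begin

lemma ddF2_bnd: "1 \<le> x \<Longrightarrow> \<bar>ddF2 x\<bar> \<le> a\<^sup>2"
proof -
  assume x: "1 \<le> x"
  have g: "a * x + (1 - a) \<ge> 1" using arg_pos1[OF x] .
  have "\<bar>a / (a * x + (1 - a))\<bar> \<le> a" using g a1 by (simp add: divide_le_eq abs_le_iff) (smt (verit) mult_le_cancel_left1)
  then have "\<bar>a / (a * x + (1 - a))\<bar>\<^sup>2 \<le> a\<^sup>2" by (rule power_mono) simp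
  then have "(a / (a * x + (1 - a)))\<^sup>2 \<le> a\<^sup>2" by (simp only: power2_abs)
  then show ?thesis by (simp add: ddF2_def)
qed

lemma ddF3_bnd: "\<bar>ddF3 x\<bar> \<le> s\<^sup>2 * B"
proof -
  have "\<bar>ddF3 x\<bar> = s\<^sup>2 * B * \<bar>sin ((- s) * x + 3 * s)\<bar>" using B_pos by (simp add: ddF3_def abs_mult)
  also have "\<dots> \<le> s\<^sup>2 * B * 1" using B_pos by (intro mult_left_mono) auto
  finally show ?thesis by simp
qed

lemma dD12_D: "1 \<le> x \<Longrightarrow> DERIV dD12 x :> ddF2 x"
proof -
  assume "1 \<le> x"
  then have "DERIV dF2 x :> ddF2 x" using dF2_D arg_pos1 by force
  then have "DERIV (\<lambda>x. dF2 x - a) x :> ddF2 x - 0" by (intro DERIV_diff) auto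
  then show ?thesis by (simp add: dD12_def[abs_def])
qed

lemma dD23_D: "1 \<le> x \<Longrightarrow> DERIV dD23 x :> ddF3 x - ddF2 x"
proof -
  assume "1 \<le> x"
  then have "DERIV dF2 x :> ddF2 x" using dF2_D arg_pos1 by force
  then have "DERIV (\<lambda>x. dF3 x - dF2 x) x :> ddF3 x - ddF2 x" using dF3_D by (intro DERIV_diff) auto
  then show ?thesis by (simp add: dD23_def[abs_def])
qed

lemma in_V2: "1 \<le> x \<Longrightarrow> x \<in> V2"
proof -
  assume "1 \<le> x"
  moreover have "1 / (2 * a) > 0" using a1 by simp
  ultimately have "1 - 1 / (2 * a) < x" by linarith
  then show ?thesis by (simp add: V2_def)
qed

lemma tay12: "1 \<le> x \<Longrightarrow> x \<le> 2 \<Longrightarrow> \<bar>dD12 x\<bar> \<le> a\<^sup>2 * (x - 1) \<and> \<bar>D12 x\<bar> \<le> a\<^sup>2 * (x - 1)\<^sup>2"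
proof (rule taylor2[where g=D12 and g'=dD12 and g''=ddF2 and c=1 and h=1])
  show "DERIV D12 y :> dD12 y" if "1 \<le> y" "y \<le> 1 + 1" for y using D12_D in_V2 that by blast
  show "DERIV dD12 y :> ddF2 y" if "1 \<le> y" "y \<le> 1 + 1" for y using dD12_D that by blast
  show "\<bar>ddF2 y\<bar> \<le> a\<^sup>2" if "1 \<le> y" "y \<le> 1 + 1" for y using ddF2_bnd that by blast
  show "D12 1 = 0" by (simp add: D12_def F2_1)
  show "dD12 1 = 0" by (simp add: dD12_def dF2_1)
qed auto

definition "C23 = s\<^sup>2 * B + a\<^sup>2"

lemma tay23: "2 \<le> x \<Longrightarrow> x \<le> 3 \<Longrightarrow> \<bar>dD23 x\<bar> \<le> C23 * (x - 2) \<and> \<bar>D23 x\<bar> \<le> C23 * (x - 2)\<^sup>2"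
proof (rule taylor2[where g=D23 and g'=dD23 and g''="\<lambda>y. ddF3 y - ddF2 y" and c=2 and h=1])
  show "DERIV D23 y :> dD23 y" if "2 \<le> y" "y \<le> 2 + 1" for y using D23_D in_V2 that by simp
  show "DERIV dD23 y :> ddF3 y - ddF2 y" if "2 \<le> y" "y \<le> 2 + 1" for y using dD23_D that by simp
  show "\<bar>ddF3 y - ddF2 y\<bar> \<le> C23" if "2 \<le> y" "y \<le> 2 + 1" for y
    using ddF3_bnd[of y] ddF2_bnd[of y] that unfolding C23_def by linarith
  show "D23 2 = 0" by (simp add: D23_def F23)
  show "dD23 2 = 0" by (simp add: dD23_def dF23)
qed auto

lemma C23_nonneg: "C23 \<ge> 0" using B_pos by (simp add: C23_def)

lemma F3_bnd: "\<bar>F3 x\<bar> \<le> B"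
  using B_pos by (simp add: F3_def abs_mult)

lemma F3_small: "x \<le> 3 \<Longrightarrow> \<bar>F3 x\<bar> \<le> B * s * (3 - x)"
proof -
  assume x: "x \<le> 3"
  have "\<bar>sin ((- s) * x + 3 * s)\<bar> \<le> \<bar>(- s) * x + 3 * s\<bar>" by (rule abs_sin_x_le_abs_x)
  also have "\<bar>(- s) * x + 3 * s\<bar> = s * (3 - x)" using s_pos x by (simp add: algebra_simps)
  finally show ?thesis using B_pos by (simp add: F3_def abs_mult mult.assoc mult_left_mono)
qed

lemma dF3_bnd: "\<bar>dF3 x\<bar> \<le> B * s"
proof -
  have "\<bar>dF3 x\<bar> = B * s * \<bar>cos ((- s) * x + 3 * s)\<bar>" using B_pos s_pos by (simp add: dF3_def abs_mult)
  also have "\<dots> \<le> B * s * 1" using B_pos s_pos by (intro mult_left_mono) auto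
  finally show ?thesis by simp
qed

lemma tri: "\<bar>X\<bar> \<le> P \<Longrightarrow> \<bar>Y\<bar> \<le> Q \<Longrightarrow> P + Q \<le> R \<Longrightarrow> \<bar>X + Y\<bar> \<le> (R::real)"
  using abs_triangle_ineq[of X Y] by linarith

lemma sig_abs: "\<bar>sig t - 1\<bar> \<le> 1" using sig_nonneg[of t] sig_le1[of t] by simp

context
  fixes d :: real
  assumes d0: "0 < d" and d4: "d \<le> 1/4"
begin

lemma regA:
  assumes x: "0 < x" "x < 1"
  shows "\<bar>phi d x - uu x\<bar> \<le> a \<and> \<bar>deriv (phi d) x - du x\<bar> \<le> 2 * a * Msig + a
    \<and> (2 * d < x \<longrightarrow> phi d x = uu x \<and> deriv (phi d) x = du x)"
proof -
  have u: "uu x = a * x" "du x = a" using x by (auto simp: uu_def du_def)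
  have p: "phi d x - uu x = (sig ((x - d) / d) - 1) * (a * x)" using phi_A[OF d0 d4 x(2)] u by (simp add: algebra_simps)
  have q: "deriv (phi d) x - du x = deriv sig ((x - d) / d) * (1 / d) * (a * x) + (sig ((x - d) / d) - 1) * a"
    using dphi_A[OF d0 d4 x(2)] u by (simp add: algebra_simps)
  have ax: "\<bar>a * x\<bar> \<le> a" using a1 x by simp
  have b1: "\<bar>phi d x - uu x\<bar> \<le> a" unfolding p using abs_mult_le[OF sig_abs ax] by simp
  have b2: "\<bar>deriv (phi d) x - du x\<bar> \<le> 2 * a * Msig + a"
  proof (cases "x \<le> 2 * d")
    case True
    have "\<bar>(1 / d) * (a * x)\<bar> \<le> 2 * a" using True d0 a1 x by (simp add: abs_mult field_simps)
    then have "\<bar>deriv sig ((x - d) / d) * ((1 / d) * (a * x))\<bar> \<le> Msig * (2 * a)" by (rule abs_mult_le[OF Msig])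
    moreover have "\<bar>(sig ((x - d) / d) - 1) * a\<bar> \<le> 1 * a" using a1 by (intro abs_mult_le[OF sig_abs]) simp
    ultimately show ?thesis unfolding q mult.assoc by (rule tri) (simp add: algebra_simps)
  next
    case False
    then have "sig ((x - d) / d) = 1" "deriv sig ((x - d) / d) = 0"
      using sig_hi[OF d0, of d x] dsig_hi[OF d0, of d x] by auto
    then show ?thesis unfolding q using a1 Msig_nonneg by simp
  qed
  have e: "phi d x = uu x \<and> deriv (phi d) x = du x" if "2 * d < x"
  proof -
    have "sig ((x - d) / d) = 1" "deriv sig ((x - d) / d) = 0"
      using sig_hi[OF d0, of d x] dsig_hi[OF d0, of d x] that by auto
    then show ?thesis using p q by simp
  qed
  show ?thesis using b1 b2 e by blast
qed

lemma regB:
  assumes x: "1 \<le> x" "x \<le> 3/2"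
  shows "\<bar>phi d x - uu x\<bar> \<le> a\<^sup>2 \<and> \<bar>deriv (phi d) x - du x\<bar> \<le> Msig * a\<^sup>2 + a\<^sup>2
    \<and> ((x = 1 \<or> 1 + d < x) \<longrightarrow> phi d x = uu x \<and> deriv (phi d) x = du x)"
proof -
  have lo: "1 - 1 / (2 * a) < x" using in_V2[OF x(1)] by (simp add: V2_def)
  have u: "uu x = a * x + D12 x" "du x = a + dD12 x"
    using x by (auto simp: uu_def du_def D12_def dD12_def F2_1 dF2_1)
  have p: "phi d x - uu x = (sig ((x - 1) / d) - 1) * D12 x" using phi_B[OF d0 d4 lo] x u by (simp add: algebra_simps)
  have q: "deriv (phi d) x - du x = deriv sig ((x - 1) / d) * (1 / d) * D12 x + (sig ((x - 1) / d) - 1) * dD12 x"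
    using dphi_B[OF d0 d4 lo] x u by (simp add: algebra_simps)
  have t: "\<bar>dD12 x\<bar> \<le> a\<^sup>2 * (x - 1)" "\<bar>D12 x\<bar> \<le> a\<^sup>2 * (x - 1)\<^sup>2" using tay12 x by auto
  have x1: "x - 1 \<le> 1" "0 \<le> x - 1" using x by auto
  have D12b: "\<bar>D12 x\<bar> \<le> a\<^sup>2"
  proof -
    have "(x - 1)\<^sup>2 \<le> 1" using x1 by (simp add: power_le_one)
    then have "a\<^sup>2 * (x - 1)\<^sup>2 \<le> a\<^sup>2" by (simp add: mult_left_le)
    then show ?thesis using t(2) by linarith
  qed
  have dD12b: "\<bar>dD12 x\<bar> \<le> a\<^sup>2"
  proof -
    have "a\<^sup>2 * (x - 1) \<le> a\<^sup>2" using x1 by (simp add: mult_left_le)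
    then show ?thesis using t(1) by linarith
  qed
  have b1: "\<bar>phi d x - uu x\<bar> \<le> a\<^sup>2" unfolding p using abs_mult_le[OF sig_abs D12b] by simp
  have b2: "\<bar>deriv (phi d) x - du x\<bar> \<le> Msig * a\<^sup>2 + a\<^sup>2"
  proof (cases "x \<le> 1 + d")
    case True
    have "(x - 1)\<^sup>2 \<le> d\<^sup>2" using True x1 by (intro power_mono) auto
    then have "\<bar>D12 x\<bar> \<le> a\<^sup>2 * d\<^sup>2" using t(2) by (smt (verit) mult_left_mono zero_le_power2)
    then have "\<bar>(1 / d) * D12 x\<bar> \<le> a\<^sup>2 * d" using d0 by (simp add: abs_mult field_simps power2_eq_square)
    also have "\<dots> \<le> a\<^sup>2" using d4 by (simp add: mult_left_le)
    finally have "\<bar>deriv sig ((x - 1) / d) * ((1 / d) * D12 x)\<bar> \<le> Msig * a\<^sup>2" by (rule abs_mult_le[OF Msig])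
    moreover have "\<bar>(sig ((x - 1) / d) - 1) * dD12 x\<bar> \<le> 1 * a\<^sup>2" by (rule abs_mult_le[OF sig_abs dD12b])
    ultimately show ?thesis unfolding q mult.assoc by (rule tri) (simp add: algebra_simps)
  next
    case False
    then have "sig ((x - 1) / d) = 1" "deriv sig ((x - 1) / d) = 0"
      using sig_hi[OF d0, of 1 x] dsig_hi[OF d0, of 1 x] by auto
    then show ?thesis unfolding q using Msig_nonneg by simp
  qed
  have e: "phi d x = uu x \<and> deriv (phi d) x = du x" if "x = 1 \<or> 1 + d < x"
  proof (cases "x = 1")
    case True
    then have "D12 x = 0" "dD12 x = 0" by (simp_all add: D12_def F2_1 dD12_def dF2_1)
    then show ?thesis using p q by simp
  next
    case False
    then have "sig ((x - 1) / d) = 1" "deriv sig ((x - 1) / d) = 0"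
      using sig_hi[OF d0, of 1 x] dsig_hi[OF d0, of 1 x] that by auto
    then show ?thesis using p q by simp
  qed
  show ?thesis using b1 b2 e by blast
qed

lemma regC:
  assumes x: "3/2 < x" "x < 5/2"
  shows "\<bar>phi d x - uu x\<bar> \<le> C23 \<and> \<bar>deriv (phi d) x - du x\<bar> \<le> Msig * C23 + C23
    \<and> ((x \<le> 2 \<or> 2 + d < x) \<longrightarrow> phi d x = uu x \<and> deriv (phi d) x = du x)"
proof (cases "x \<le> 2")
  case True
  have u: "uu x = F2 x" "du x = dF2 x" using x True by (auto simp: uu_def du_def)
  have z: "sig ((x - 2) / d) * D23 x = 0 \<and> deriv sig ((x - 2) / d) * (1 / d) * D23 x + dD23 x * sig ((x - 2) / d) = 0"
  proof (cases "x = 2")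
    case True
    then have "D23 x = 0" "dD23 x = 0" by (simp_all add: D23_def F23 dD23_def dF23)
    then show ?thesis by simp
  next
    case False
    then have "x < 2" using True by simp
    then have "sig ((x - 2) / d) = 0" "deriv sig ((x - 2) / d) = 0"
      using sig_lo[OF d0, of x 2] dsig_lo[OF d0, of x 2] by auto
    then show ?thesis by simp
  qed
  have "phi d x = uu x" "deriv (phi d) x = du x"
    using phi_C[OF d0 d4 x] dphi_C[OF d0 d4 x] z u by simp_all
  then show ?thesis using C23_nonneg Msig_nonneg by simp
next
  case False
  then have x2: "2 < x" by simp
  have u: "uu x = F2 x + D23 x" "du x = dF2 x + dD23 x" using x2 x by (auto simp: uu_def du_def D23_def dD23_def)
  have p: "phi d x - uu x = (sig ((x - 2) / d) - 1) * D23 x" using phi_C[OF d0 d4 x] u by (simp add: algebra_simps)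
  have q: "deriv (phi d) x - du x = deriv sig ((x - 2) / d) * (1 / d) * D23 x + (sig ((x - 2) / d) - 1) * dD23 x"
    using dphi_C[OF d0 d4 x] u by (simp add: algebra_simps)
  have t: "\<bar>dD23 x\<bar> \<le> C23 * (x - 2)" "\<bar>D23 x\<bar> \<le> C23 * (x - 2)\<^sup>2" using tay23 x2 x by auto
  have x1: "x - 2 \<le> 1" "0 \<le> x - 2" using x x2 by auto
  have D23b: "\<bar>D23 x\<bar> \<le> C23"
  proof -
    have "(x - 2)\<^sup>2 \<le> 1" using x1 by (simp add: power_le_one)
    then have "C23 * (x - 2)\<^sup>2 \<le> C23" using C23_nonneg by (simp add: mult_left_le)
    then show ?thesis using t(2) by linarith
  qed
  have dD23b: "\<bar>dD23 x\<bar> \<le> C23"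
  proof -
    have "C23 * (x - 2) \<le> C23" using x1 C23_nonneg by (simp add: mult_left_le)
    then show ?thesis using t(1) by linarith
  qed
  have b1: "\<bar>phi d x - uu x\<bar> \<le> C23" unfolding p using abs_mult_le[OF sig_abs D23b] by simp
  have b2: "\<bar>deriv (phi d) x - du x\<bar> \<le> Msig * C23 + C23"
  proof (cases "x \<le> 2 + d")
    case True
    have "(x - 2)\<^sup>2 \<le> d\<^sup>2" using True x1 by (intro power_mono) auto
    then have "C23 * (x - 2)\<^sup>2 \<le> C23 * d\<^sup>2" using C23_nonneg by (intro mult_left_mono) auto
    then have "\<bar>D23 x\<bar> \<le> C23 * d\<^sup>2" using t(2) by linarith
    then have "\<bar>(1 / d) * D23 x\<bar> \<le> C23 * d" using d0 by (simp add: abs_mult field_simps power2_eq_square)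
    also have "\<dots> \<le> C23" using d4 C23_nonneg by (simp add: mult_left_le)
    finally have "\<bar>deriv sig ((x - 2) / d) * ((1 / d) * D23 x)\<bar> \<le> Msig * C23" by (rule abs_mult_le[OF Msig])
    moreover have "\<bar>(sig ((x - 2) / d) - 1) * dD23 x\<bar> \<le> 1 * C23" by (rule abs_mult_le[OF sig_abs dD23b])
    ultimately show ?thesis unfolding q mult.assoc by (rule tri) (simp add: algebra_simps)
  next
    case False
    then have "sig ((x - 2) / d) = 1" "deriv sig ((x - 2) / d) = 0"
      using sig_hi[OF d0, of 2 x] dsig_hi[OF d0, of 2 x] by auto
    then show ?thesis unfolding q using Msig_nonneg C23_nonneg by simp
  qed
  have e: "phi d x = uu x \<and> deriv (phi d) x = du x" if "2 + d < x"
  proof -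
    have "sig ((x - 2) / d) = 1" "deriv sig ((x - 2) / d) = 0"
      using sig_hi[OF d0, of 2 x] dsig_hi[OF d0, of 2 x] that by auto
    then show ?thesis using p q by simp
  qed
  show ?thesis using b1 b2 e x2 by auto
qed

lemma regD:
  assumes x: "5/2 \<le> x" "x < 3"
  shows "\<bar>phi d x - uu x\<bar> \<le> B \<and> \<bar>deriv (phi d) x - du x\<bar> \<le> 2 * Msig * B * s + B * s
    \<and> (x < 3 - 2 * d \<longrightarrow> phi d x = uu x \<and> deriv (phi d) x = du x)"
proof -
  have x94: "9/4 < x" using x by simp
  have u: "uu x = F3 x" "du x = dF3 x" using x by (auto simp: uu_def du_def)
  have p: "phi d x - uu x = (sig ((3 - d - x) / d) - 1) * F3 x" using phi_D[OF d0 d4 x94] u by (simp add: algebra_simps)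
  have q: "deriv (phi d) x - du x = deriv sig ((3 - d - x) / d) * (- 1 / d) * F3 x + (sig ((3 - d - x) / d) - 1) * dF3 x"
    using dphi_D[OF d0 d4 x94] u by (simp add: algebra_simps)
  have b1: "\<bar>phi d x - uu x\<bar> \<le> B" unfolding p using abs_mult_le[OF sig_abs F3_bnd] by simp
  have b2: "\<bar>deriv (phi d) x - du x\<bar> \<le> 2 * Msig * B * s + B * s"
  proof (cases "3 - 2 * d \<le> x")
    case True
    have "\<bar>F3 x\<bar> \<le> B * s * (3 - x)" using F3_small x by simp
    also have "\<dots> \<le> B * s * (2 * d)" using True B_pos s_pos by (intro mult_left_mono) auto
    finally have "\<bar>(- 1 / d) * F3 x\<bar> \<le> 2 * B * s" using d0 by (simp add: abs_mult field_simps)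
    then have "\<bar>deriv sig ((3 - d - x) / d) * ((- 1 / d) * F3 x)\<bar> \<le> Msig * (2 * B * s)" by (rule abs_mult_le[OF Msig])
    moreover have "\<bar>(sig ((3 - d - x) / d) - 1) * dF3 x\<bar> \<le> 1 * (B * s)" by (rule abs_mult_le[OF sig_abs dF3_bnd])
    ultimately show ?thesis unfolding q mult.assoc by (rule tri) (simp add: algebra_simps)
  next
    case False
    then have "sig ((3 - d - x) / d) = 1" "deriv sig ((3 - d - x) / d) = 0"
      using sig_hi'[OF d0, of x "3 - d"] dsig_hi'[OF d0, of x "3 - d"] by auto
    then show ?thesis unfolding q using Msig_nonneg B_pos s_pos by simp
  qed
  have e: "phi d x = uu x \<and> deriv (phi d) x = du x" if "x < 3 - 2 * d"
  proof -
    have "sig ((3 - d - x) / d) = 1" "deriv sig ((3 - d - x) / d) = 0"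
      using sig_hi'[OF d0, of x "3 - d"] dsig_hi'[OF d0, of x "3 - d"] that by auto
    then show ?thesis using p q by simp
  qed
  show ?thesis using b1 b2 e by blast
qed

end

end


lemma dct0:
  fixes h :: "nat \<Rightarrow> real \<Rightarrow> real"
  assumes m: "\<And>k. h k \<in> borel_measurable borel"
    and b: "\<And>k x. 0 < x \<Longrightarrow> x < 3 \<Longrightarrow> \<bar>h k x\<bar> \<le> K"
    and e: "\<And>x. 0 < x \<Longrightarrow> x < 3 \<Longrightarrow> \<forall>\<^sub>F k in sequentially. h k x = 0"
  shows "(\<lambda>k. \<integral>x. (h k x)\<^sup>2 \<partial>intv 0 3) \<longlonglongrightarrow> 0"
proof -
  have "(\<lambda>k. \<integral>x. (h k x)\<^sup>2 \<partial>intv 0 3) \<longlonglongrightarrow> (\<integral>x. 0 \<partial>intv 0 3)"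
  proof (rule integral_dominated_convergence[where w="\<lambda>x. K\<^sup>2"])
    show "(\<lambda>x. 0::real) \<in> borel_measurable (intv 0 3)" by simp
    show "(\<lambda>x. (h k x)\<^sup>2) \<in> borel_measurable (intv 0 3)" for k
      by (rule meas_intv) (use m in measurable)
    show "integrable (intv 0 3) (\<lambda>x. K\<^sup>2)" by (rule finite_measure.integrable_const[OF finite_intv])
    show "AE x in intv 0 3. (\<lambda>k. (h k x)\<^sup>2) \<longlonglongrightarrow> 0"
    proof (rule AE_intv)
      fix x :: real assume "0 < x" "x < 3"
      from e[OF this] have "\<forall>\<^sub>F k in sequentially. (h k x)\<^sup>2 = 0" by eventually_elim simp
      then show "(\<lambda>k. (h k x)\<^sup>2) \<longlonglongrightarrow> 0" by (rule tendsto_eventually)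
    qed
    show "AE x in intv 0 3. norm ((h k x)\<^sup>2) \<le> K\<^sup>2" for k
    proof (rule AE_intv)
      fix x :: real assume "0 < x" "x < 3"
      then have "\<bar>h k x\<bar> \<le> K" by (rule b)
      then have "\<bar>h k x\<bar>\<^sup>2 \<le> K\<^sup>2" by (rule power_mono) simp
      then show "norm ((h k x)\<^sup>2) \<le> K\<^sup>2" by simp
    qed
  qed
  then show ?thesis by simp
qed

definition dk :: "nat \<Rightarrow> real" where "dk k = 1 / (real k + 4)"

lemma dk_pos: "0 < dk k" by (simp add: dk_def)
lemma dk_le: "dk k \<le> 1/4" by (simp add: dk_def field_simps)
lemma dk_lim: "dk \<longlonglongrightarrow> 0"
proof -
  have "(\<lambda>k. 1 / (real k + 4)) \<longlonglongrightarrow> 0"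
    using LIMSEQ_ignore_initial_segment[OF lim_inverse_n', of 4] by (simp add: add.commute)
  then show ?thesis by (simp add: dk_def[abs_def])
qed
lemma dk_ev: "e > 0 \<Longrightarrow> \<forall>\<^sub>F k in sequentially. dk k < e"
  using order_tendstoD(2)[OF dk_lim] by blast

context sol
begin

definition "K0 = a + a\<^sup>2 + C23 + B"
definition "K1 = (2 * a * Msig + a) + (Msig * a\<^sup>2 + a\<^sup>2) + (Msig * C23 + C23) + (2 * Msig * B * s + B * s)"

lemma err:
  assumes d: "0 < d" "d \<le> 1/4" and x: "0 < x" "x < 3"
  shows "\<bar>phi d x - uu x\<bar> \<le> K0 \<and> \<bar>deriv (phi d) x - du x\<bar> \<le> K1"
proof -
  have n: "0 \<le> a" "0 \<le> a\<^sup>2" "0 \<le> C23" "0 \<le> B" "0 \<le> Msig" "0 \<le> s"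
    using a1 C23_nonneg B_pos Msig_nonneg s_pos by auto
  have n2: "0 \<le> 2 * a * Msig + a" "0 \<le> Msig * a\<^sup>2 + a\<^sup>2" "0 \<le> Msig * C23 + C23" "0 \<le> 2 * Msig * B * s + B * s"
    using n by auto
  consider "x < 1" | "1 \<le> x \<and> x \<le> 3/2" | "3/2 < x \<and> x < 5/2" | "5/2 \<le> x" by linarith
  then show ?thesis
  proof cases
    case 1 then show ?thesis using regA[OF d x(1) 1] n n2 unfolding K0_def K1_def by linarith
  next
    case 2 then show ?thesis using regB[OF d] n n2 unfolding K0_def K1_def by (meson order_trans le_add_same_cancel1 add_increasing add_increasing2 regB[OF d])
  next
    case 3 then show ?thesis using regC[OF d] n n2 unfolding K0_def K1_def by (smt (verit))
  next
    case 4 then show ?thesis using regD[OF d 4 x(2)] n n2 unfolding K0_def K1_def by linarith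
  qed
qed

lemma good:
  assumes x: "0 < x" "x < 3"
  shows "\<exists>e>0. \<forall>d. 0 < d \<longrightarrow> d \<le> 1/4 \<longrightarrow> d < e \<longrightarrow> phi d x = uu x \<and> deriv (phi d) x = du x"
proof -
  consider "x < 1" | "x = 1" | "1 < x \<and> x \<le> 3/2" | "3/2 < x \<and> x \<le> 2" | "2 < x \<and> x < 5/2" | "5/2 \<le> x" by linarith
  then show ?thesis
  proof cases
    case 1 show ?thesis by (rule exI[of _ "x/2"]) (use regA[of _ x] x 1 in auto)
  next
    case 2 show ?thesis by (rule exI[of _ 1]) (use regB[of _ 1] 2 in auto)
  next
    case 3 show ?thesis by (rule exI[of _ "x - 1"]) (use regB[of _ x] 3 in auto)
  next
    case 4 show ?thesis by (rule exI[of _ 1]) (use regC[of _ x] 4 in auto)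
  next
    case 5 show ?thesis by (rule exI[of _ "x - 2"]) (use regC[of _ x] 5 in auto)
  next
    case 6 show ?thesis by (rule exI[of _ "(3 - x)/2"]) (use regD[of _ x] x 6 in auto)
  qed
qed

definition "pk k = phi (dk k)"

lemma test_pk: "test_fun 0 3 (pk k)"
  unfolding pk_def by (rule test_phi[OF dk_pos dk_le])

lemma pk_ev: "0 < x \<Longrightarrow> x < 3 \<Longrightarrow> \<forall>\<^sub>F k in sequentially. pk k x = uu x \<and> deriv (pk k) x = du x"
proof -
  assume x: "0 < x" "x < 3"
  obtain e where e: "e > 0" "\<And>d. 0 < d \<Longrightarrow> d \<le> 1/4 \<Longrightarrow> d < e \<Longrightarrow> phi d x = uu x \<and> deriv (phi d) x = du x"
    using good[OF x] by blast
  from dk_ev[OF e(1)] show ?thesis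
    by eventually_elim (use e(2) dk_pos dk_le in \<open>auto simp: pk_def\<close>)
qed

lemma lim_pk: "(\<lambda>k. \<integral>x. (pk k x - uu x)\<^sup>2 \<partial>intv 0 3) \<longlonglongrightarrow> 0"
proof (rule dct0[where K=K0])
  show "(\<lambda>x. pk k x - uu x) \<in> borel_measurable borel" for k
    using test_meas[OF test_pk] meas_uu by (intro borel_measurable_diff) auto
  show "\<bar>pk k x - uu x\<bar> \<le> K0" if "0 < x" "x < 3" for k x
    using err[OF dk_pos dk_le that] by (simp add: pk_def)
  show "\<forall>\<^sub>F k in sequentially. pk k x - uu x = 0" if "0 < x" "x < 3" for x
    using pk_ev[OF that] by eventually_elim simp
qed

lemma lim_dpk: "(\<lambda>k. \<integral>x. (deriv (pk k) x - du x)\<^sup>2 \<partial>intv 0 3) \<longlonglongrightarrow> 0"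
proof (rule dct0[where K=K1])
  show "(\<lambda>x. deriv (pk k) x - du x) \<in> borel_measurable borel" for k
    using test_deriv_meas[OF test_pk] meas_du by (intro borel_measurable_diff) auto
  show "\<bar>deriv (pk k) x - du x\<bar> \<le> K1" if "0 < x" "x < 3" for k x
    using err[OF dk_pos dk_le that] by (simp add: pk_def)
  show "\<forall>\<^sub>F k in sequentially. deriv (pk k) x - du x = 0" if "0 < x" "x < 3" for x
    using pk_ev[OF that] by eventually_elim simp
qed

lemma H10_uu: "H10 0 3 uu"
  unfolding H10_def using L2_uu L2_du wd_uu test_pk lim_pk lim_dpk by blast

end


lemma L2_diff:
  assumes f: "L2 a b f" and g: "L2 a b g"
  shows "L2 a b (\<lambda>x. f x - g x)"
proof -
  have mf: "f \<in> borel_measurable (intv a b)" and mg: "g \<in> borel_measurable (intv a b)"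
    and if2: "integrable (intv a b) (\<lambda>x. (f x)\<^sup>2)" and ig2: "integrable (intv a b) (\<lambda>x. (g x)\<^sup>2)"
    using f g unfolding L2_def by auto
  have m: "(\<lambda>x. f x - g x) \<in> borel_measurable (intv a b)" using mf mg by (rule borel_measurable_diff)
  have "integrable (intv a b) (\<lambda>x. 2 * (f x)\<^sup>2 + 2 * (g x)\<^sup>2)" using if2 ig2 by auto
  then have "integrable (intv a b) (\<lambda>x. (f x - g x)\<^sup>2)"
  proof (rule Bochner_Integration.integrable_bound)
    show "(\<lambda>x. (f x - g x)\<^sup>2) \<in> borel_measurable (intv a b)" using m by measurable
    show "AE x in intv a b. norm ((f x - g x)\<^sup>2) \<le> norm (2 * (f x)\<^sup>2 + 2 * (g x)\<^sup>2)"
    proof (rule AE_I2)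
      fix x
      have "0 \<le> (f x + g x)\<^sup>2" by simp
      then have "(f x - g x)\<^sup>2 \<le> 2 * (f x)\<^sup>2 + 2 * (g x)\<^sup>2" by (simp add: power2_diff power2_sum)
      then show "norm ((f x - g x)\<^sup>2) \<le> norm (2 * (f x)\<^sup>2 + 2 * (g x)\<^sup>2)" by simp
    qed
  qed
  then show ?thesis unfolding L2_def using m by blast
qed

lemma L2_int_mult:
  "L2 a b f \<Longrightarrow> L2 a b g \<Longrightarrow> integrable (intv a b) (\<lambda>x. f x * g x)"
  unfolding L2_def by (intro integrable_mult_sq) auto

lemma L2_conv':
  assumes "L2 a b w" "\<And>k. L2 a b (d k)" "(\<lambda>k. \<integral>x. (d k x)\<^sup>2 \<partial>intv a b) \<longlonglongrightarrow> 0"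
  shows "(\<lambda>k. \<integral>x. w x * d k x \<partial>intv a b) \<longlonglongrightarrow> 0"
  using assms unfolding L2_def by (intro L2_conv) auto

lemma L2_bnd0:
  assumes "f \<in> borel_measurable borel" "\<And>x. 0 < x \<Longrightarrow> x < 3 \<Longrightarrow> \<bar>f x\<bar> \<le> C"
  shows "L2 0 3 f"
proof -
  have "integrable (intv 0 3) (\<lambda>x. (f x)\<^sup>2)"
  proof (rule integrable_intv_bound[where B="C\<^sup>2"])
    show "(\<lambda>x. (f x)\<^sup>2) \<in> borel_measurable borel" using assms(1) by measurable
    fix x :: real assume "0 < x" "x < 3"
    then have "\<bar>f x\<bar> \<le> C" by (rule assms(2))
    then have "\<bar>f x\<bar>\<^sup>2 \<le> C\<^sup>2" by (rule power_mono) simp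
    then show "\<bar>(f x)\<^sup>2\<bar> \<le> C\<^sup>2" by simp
  qed
  then show ?thesis unfolding L2_def using meas_intv[OF assms(1)] by blast
qed

lemma L2_test: "test_fun 0 3 \<psi> \<Longrightarrow> L2 0 3 \<psi>"
proof -
  assume t: "test_fun 0 3 \<psi>"
  obtain C where "\<And>x. \<bar>\<psi> x\<bar> \<le> C" using test_bound[OF t] by blast
  then show ?thesis by (intro L2_bnd0[OF test_meas[OF t]]) auto
qed

lemma lim_prod:
  assumes w: "L2 0 3 w" and f: "L2 0 3 f" and p: "\<And>k. L2 0 3 (p k)"
    and l: "(\<lambda>k. \<integral>x. (p k x - f x)\<^sup>2 \<partial>intv 0 3) \<longlonglongrightarrow> 0"
  shows "(\<lambda>k. \<integral>x. w x * p k x \<partial>intv 0 3) \<longlonglongrightarrow> (\<integral>x. w x * f x \<partial>intv 0 3)"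
proof -
  have c: "(\<lambda>k. \<integral>x. w x * (p k x - f x) \<partial>intv 0 3) \<longlonglongrightarrow> 0"
    by (rule L2_conv'[OF w L2_diff[OF p f] l])
  have eq: "(\<integral>x. w x * (p k x - f x) \<partial>intv 0 3) = (\<integral>x. w x * p k x \<partial>intv 0 3) - (\<integral>x. w x * f x \<partial>intv 0 3)" for k
  proof -
    have "(\<integral>x. w x * (p k x - f x) \<partial>intv 0 3) = (\<integral>x. w x * p k x - w x * f x \<partial>intv 0 3)"
      by (simp add: right_diff_distrib)
    also have "\<dots> = (\<integral>x. w x * p k x \<partial>intv 0 3) - (\<integral>x. w x * f x \<partial>intv 0 3)"
      by (rule Bochner_Integration.integral_diff[OF L2_int_mult[OF w p] L2_int_mult[OF w f]])
    finally show ?thesis .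
  qed
  from tendsto_add[OF c[unfolded eq] tendsto_const[of "\<integral>x. w x * f x \<partial>intv 0 3"]]
  show ?thesis by simp
qed

context sol
begin

lemma bnd_mu: "\<exists>C. \<forall>x. 0 < x \<longrightarrow> x < 3 \<longrightarrow> \<bar>indicator {1<..<2} x * (du x)\<^sup>2\<bar> \<le> C"
proof -
  obtain C where C: "\<forall>x. 0 < x \<longrightarrow> x < 3 \<longrightarrow> \<bar>du x\<bar> \<le> C" using bnd_du by blast
  have "\<bar>indicator {1<..<2} x * (du x)\<^sup>2\<bar> \<le> C\<^sup>2" if "0 < x" "x < 3" for x
  proof -
    have "\<bar>du x\<bar> \<le> C" using C that by blast
    then have "\<bar>du x\<bar>\<^sup>2 \<le> C\<^sup>2" by (rule power_mono) simp
    then show ?thesis by (simp add: indicator_def)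
  qed
  then show ?thesis by blast
qed

lemma bnd_c: "\<exists>C. \<forall>x. 0 < x \<longrightarrow> x < 3 \<longrightarrow> \<bar>indicator {2<..<3} x * uu x\<bar> \<le> C"
proof -
  obtain C where C: "\<forall>x. 0 < x \<longrightarrow> x < 3 \<longrightarrow> \<bar>uu x\<bar> \<le> C" using bnd_uu by blast
  have "\<bar>indicator {2<..<3} x * uu x\<bar> \<le> C" if "0 < x" "x < 3" for x
    using C that by (auto simp: indicator_def)
  then show ?thesis by blast
qed

lemma L2_mu: "L2 0 3 (\<lambda>x. indicator {1<..<2} x * (du x)\<^sup>2)"
proof -
  obtain C where C: "\<forall>x. 0 < x \<longrightarrow> x < 3 \<longrightarrow> \<bar>indicator {1<..<2} x * (du x)\<^sup>2\<bar> \<le> C" using bnd_mu by blast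
  show ?thesis by (rule L2_bnd0[where C=C]) (use C meas_du in \<open>auto, measurable\<close>)
qed

lemma L2_c: "L2 0 3 (\<lambda>x. indicator {2<..<3} x * uu x)"
proof -
  obtain C where C: "\<forall>x. 0 < x \<longrightarrow> x < 3 \<longrightarrow> \<bar>indicator {2<..<3} x * uu x\<bar> \<le> C" using bnd_c by blast
  show ?thesis by (rule L2_bnd0[where C=C]) (use C meas_uu in \<open>auto, measurable\<close>)
qed

lemma ws: "weak_sol 0 3 (indicator {1<..<2}) (indicator {2<..<3}) (s\<^sup>2) uu"
  unfolding weak_sol_def
proof (intro conjI H10_uu Linf_uu exI[of _ du] wd_uu L2_du allI impI)
  fix \<phi> \<phi>' assume H: "H10 0 3 \<phi> \<and> Linf 0 3 \<phi> \<and> weak_deriv 0 3 \<phi> \<phi>' \<and> L2 0 3 \<phi>'"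
  then have wd': "weak_deriv 0 3 \<phi> \<phi>'" and L2p': "L2 0 3 \<phi>'" and H10: "H10 0 3 \<phi>" by auto
  obtain g \<psi> where L2p: "L2 0 3 \<phi>" and L2g: "L2 0 3 g" and wdg: "weak_deriv 0 3 \<phi> g"
    and t: "\<And>k. test_fun 0 3 (\<psi> k)"
    and l1: "(\<lambda>k. \<integral>x. (\<psi> k x - \<phi> x)\<^sup>2 \<partial>intv 0 3) \<longlonglongrightarrow> 0"
    and l2: "(\<lambda>k. \<integral>x. (deriv (\<psi> k) x - g x)\<^sup>2 \<partial>intv 0 3) \<longlonglongrightarrow> 0"
    using H10 unfolding H10_def by blast
  have e1: "(\<integral>x. du x * deriv (\<psi> k) x \<partial>intv 0 3) = - (\<integral>x. ddu x * \<psi> k x \<partial>intv 0 3)" for k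
    using wd_du t unfolding weak_deriv_def by blast
  have c1: "(\<lambda>k. \<integral>x. du x * deriv (\<psi> k) x \<partial>intv 0 3) \<longlonglongrightarrow> (\<integral>x. du x * g x \<partial>intv 0 3)"
    by (rule lim_prod[OF L2_du L2g L2_test[OF test_deriv_test[OF t]] l2])
  have c2: "(\<lambda>k. \<integral>x. ddu x * \<psi> k x \<partial>intv 0 3) \<longlonglongrightarrow> (\<integral>x. ddu x * \<phi> x \<partial>intv 0 3)"
    by (rule lim_prod[OF L2_ddu L2p L2_test[OF t] l1])
  have r1: "(\<integral>x. du x * g x \<partial>intv 0 3) = - (\<integral>x. ddu x * \<phi> x \<partial>intv 0 3)"
    using LIMSEQ_unique[OF c1[unfolded e1] tendsto_minus[OF c2]] .
  \<comment> \<open>identify g with \<phi>' against du\<close>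
  have z: "(\<integral>x. (g x - \<phi>' x) * deriv (pk k) x \<partial>intv 0 3) = 0" for k
  proof -
    have tk: "test_fun 0 3 (deriv (pk k))" by (rule test_deriv_test[OF test_pk])
    have "(\<integral>x. \<phi> x * deriv (deriv (pk k)) x \<partial>intv 0 3) = - (\<integral>x. g x * deriv (pk k) x \<partial>intv 0 3)"
      using wdg tk unfolding weak_deriv_def by blast
    moreover have "(\<integral>x. \<phi> x * deriv (deriv (pk k)) x \<partial>intv 0 3) = - (\<integral>x. \<phi>' x * deriv (pk k) x \<partial>intv 0 3)"
      using wd' tk unfolding weak_deriv_def by blast
    ultimately have "(\<integral>x. g x * deriv (pk k) x \<partial>intv 0 3) = (\<integral>x. \<phi>' x * deriv (pk k) x \<partial>intv 0 3)" by simp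
    moreover have "(\<integral>x. (g x - \<phi>' x) * deriv (pk k) x \<partial>intv 0 3) =
      (\<integral>x. g x * deriv (pk k) x \<partial>intv 0 3) - (\<integral>x. \<phi>' x * deriv (pk k) x \<partial>intv 0 3)"
      unfolding left_diff_distrib
      by (rule Bochner_Integration.integral_diff[OF L2_int_mult[OF L2g L2_test[OF tk]] L2_int_mult[OF L2p' L2_test[OF tk]]])
    ultimately show ?thesis by simp
  qed
  have c3: "(\<lambda>k. \<integral>x. (g x - \<phi>' x) * deriv (pk k) x \<partial>intv 0 3) \<longlonglongrightarrow> (\<integral>x. (g x - \<phi>' x) * du x \<partial>intv 0 3)"
    by (rule lim_prod[OF L2_diff[OF L2g L2p'] L2_du L2_test[OF test_deriv_test[OF test_pk]] lim_dpk])
  have r2: "(\<integral>x. (g x - \<phi>' x) * du x \<partial>intv 0 3) = 0"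
    using LIMSEQ_unique[OF c3] z by simp
  have r3: "(\<integral>x. du x * \<phi>' x \<partial>intv 0 3) = (\<integral>x. du x * g x \<partial>intv 0 3)"
  proof -
    have "(\<integral>x. (g x - \<phi>' x) * du x \<partial>intv 0 3) = (\<integral>x. du x * g x \<partial>intv 0 3) - (\<integral>x. du x * \<phi>' x \<partial>intv 0 3)"
    proof -
      have "(\<integral>x. (g x - \<phi>' x) * du x \<partial>intv 0 3) = (\<integral>x. du x * g x - du x * \<phi>' x \<partial>intv 0 3)"
        by (simp add: algebra_simps)
      also have "\<dots> = (\<integral>x. du x * g x \<partial>intv 0 3) - (\<integral>x. du x * \<phi>' x \<partial>intv 0 3)"
        by (rule Bochner_Integration.integral_diff[OF L2_int_mult[OF L2_du L2g] L2_int_mult[OF L2_du L2p']])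
      finally show ?thesis .
    qed
    then show ?thesis using r2 by simp
  qed
  have r4: "- (\<integral>x. ddu x * \<phi> x \<partial>intv 0 3) =
     (\<integral>x. indicator {1<..<2} x * (du x)\<^sup>2 * \<phi> x \<partial>intv 0 3) + s\<^sup>2 * (\<integral>x. indicator {2<..<3} x * uu x * \<phi> x \<partial>intv 0 3)"
  proof -
    have i1: "integrable (intv 0 3) (\<lambda>x. indicator {1<..<2} x * (du x)\<^sup>2 * \<phi> x)"
      by (rule L2_int_mult[OF L2_mu L2p])
    have i2: "integrable (intv 0 3) (\<lambda>x. indicator {2<..<3} x * uu x * \<phi> x)"
      by (rule L2_int_mult[OF L2_c L2p])
    have "- (\<integral>x. ddu x * \<phi> x \<partial>intv 0 3) = (\<integral>x. - (ddu x * \<phi> x) \<partial>intv 0 3)"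
      by (simp only: Bochner_Integration.integral_minus)
    also have "\<dots> = (\<integral>x. indicator {1<..<2} x * (du x)\<^sup>2 * \<phi> x + s\<^sup>2 * (indicator {2<..<3} x * uu x * \<phi> x) \<partial>intv 0 3)"
      by (rule Bochner_Integration.integral_cong) (simp_all add: ddu_def algebra_simps)
    also have "\<dots> = (\<integral>x. indicator {1<..<2} x * (du x)\<^sup>2 * \<phi> x \<partial>intv 0 3) + (\<integral>x. s\<^sup>2 * (indicator {2<..<3} x * uu x * \<phi> x) \<partial>intv 0 3)"
      using i1 i2 by simp
    also have "\<dots> = (\<integral>x. indicator {1<..<2} x * (du x)\<^sup>2 * \<phi> x \<partial>intv 0 3) + s\<^sup>2 * (\<integral>x. indicator {2<..<3} x * uu x * \<phi> x \<partial>intv 0 3)"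
      by simp
    finally show ?thesis .
  qed
  show "(\<integral>x. du x * \<phi>' x \<partial>intv 0 3) =
     (\<integral>x. indicator {1<..<2} x * (du x)\<^sup>2 * \<phi> x \<partial>intv 0 3) + s\<^sup>2 * (\<integral>x. indicator {2<..<3} x * uu x * \<phi> x \<partial>intv 0 3)"
    using r3 r1 r4 by simp
qed

end


definition aj :: "nat \<Rightarrow> real" where "aj j = real j + 1"
definition rj :: "nat \<Rightarrow> real" where "rj j = aj j / ((1 + aj j) * (aj j + ln (1 + aj j)))"
definition sj :: "nat \<Rightarrow> real" where
  "sj j = (SOME t. pi / 2 \<le> t \<and> t \<le> pi \<and> t * cos t + rj j * sin t = 0)"
definition Bj :: "nat \<Rightarrow> real" where "Bj j = (aj j + ln (1 + aj j)) / sin (sj j)"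

lemma aj1: "1 \<le> aj j" by (simp add: aj_def)

lemma L_pos: "aj j + ln (1 + aj j) > 0"
proof -
  have "ln (1 + aj j) \<ge> 0" using aj1[of j] by simp
  then show ?thesis using aj1[of j] by linarith
qed

lemma rj_pos: "0 < rj j"
  using aj1[of j] L_pos[of j] by (simp add: rj_def)

lemma rj_le: "rj j \<le> 1 / (1 + aj j)"
proof -
  have "aj j \<le> aj j + ln (1 + aj j)" using aj1[of j] by simp
  then have "aj j / (aj j + ln (1 + aj j)) \<le> 1" using L_pos[of j] by simp
  then have "aj j / (aj j + ln (1 + aj j)) / (1 + aj j) \<le> 1 / (1 + aj j)"
    using aj1[of j] by (intro divide_right_mono) auto
  then show ?thesis by (simp add: rj_def field_simps)
qed

lemma sj_ex: "\<exists>t. pi / 2 \<le> t \<and> t \<le> pi \<and> t * cos t + rj j * sin t = 0"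
proof (rule IVT2[where f="\<lambda>t. t * cos t + rj j * sin t"])
  show "pi * cos pi + rj j * sin pi \<le> 0" by simp
  show "0 \<le> pi / 2 * cos (pi / 2) + rj j * sin (pi / 2)" using rj_pos[of j] by simp
  show "pi / 2 \<le> pi" by simp
  show "\<forall>x. pi / 2 \<le> x \<and> x \<le> pi \<longrightarrow> isCont (\<lambda>t. t * cos t + rj j * sin t) x"
    by (auto intro!: continuous_intros)
qed

lemma sj: "pi / 2 \<le> sj j" "sj j \<le> pi" "sj j * cos (sj j) + rj j * sin (sj j) = 0"
  using someI_ex[OF sj_ex[of j]] unfolding sj_def[symmetric] by auto

lemma sj_lt: "sj j < pi"
proof (rule ccontr)
  assume "\<not> sj j < pi"
  then have "sj j = pi" using sj(2)[of j] by simp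
  then show False using sj(3)[of j] by simp
qed

lemma aux_cancel: "(L::real) \<noteq> 0 \<Longrightarrow> L * (x / (y * L)) = x / y"
  by (cases "y = 0") (simp_all add: field_simps)

lemma sol_j: "sol (aj j) (sj j) (Bj j)"
proof
  show "1 \<le> aj j" by (rule aj1)
  show "pi / 2 \<le> sj j" by (rule sj(1))
  show "sj j < pi" by (rule sj_lt)
  have sp: "sin (sj j) > 0"
  proof (rule sin_gt_zero)
    show "0 < sj j" using sj(1)[of j] pi_gt_zero by linarith
  qed (rule sj_lt)
  show "Bj j * sin (sj j) = aj j + ln (1 + aj j)" using sp by (simp add: Bj_def)
  have sc: "sj j * cos (sj j) = - rj j * sin (sj j)" using sj(3)[of j] by linarith
  have "- Bj j * sj j * cos (sj j) = - Bj j * (sj j * cos (sj j))" by simp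
  also have "\<dots> = (aj j + ln (1 + aj j)) * rj j" using sp by (simp add: sc Bj_def)
  also have "\<dots> = aj j / (1 + aj j)" unfolding rj_def by (rule aux_cancel) (use L_pos[of j] in simp)
  finally show "- Bj j * sj j * cos (sj j) = aj j / (1 + aj j)" .
qed

lemma rj_lim: "rj \<longlonglongrightarrow> 0"
proof -
  have "(\<lambda>j. 1 / (real j + 2)) \<longlonglongrightarrow> 0"
    using LIMSEQ_ignore_initial_segment[OF lim_inverse_n', of 2] by (simp add: add.commute)
  moreover have "1 / (1 + aj j) = 1 / (real j + 2)" for j by (simp add: aj_def)
  ultimately have l: "(\<lambda>j. 1 / (1 + aj j)) \<longlonglongrightarrow> 0" by (simp only:)
  show ?thesis
    by (rule Lim_null_comparison[OF _ l]) (use rj_pos rj_le in \<open>auto intro!: always_eventually simp: less_imp_le\<close>)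
qed

lemma cos_lim: "(\<lambda>j. cos (sj j)) \<longlonglongrightarrow> 0"
proof (rule Lim_null_comparison[OF _ rj_lim])
  show "\<forall>\<^sub>F j in sequentially. norm (cos (sj j)) \<le> rj j"
  proof (intro always_eventually allI)
    fix j
    have s1: "sj j \<ge> 1" using sj(1)[of j] pi_ge_two by linarith
    have sc: "sj j * cos (sj j) = - (rj j * sin (sj j))" using sj(3)[of j] by linarith
    have "\<bar>sj j * cos (sj j)\<bar> = \<bar>rj j * sin (sj j)\<bar>" unfolding sc by (rule abs_minus_cancel)
    then have "sj j * \<bar>cos (sj j)\<bar> = rj j * \<bar>sin (sj j)\<bar>"
      using rj_pos[of j] s1 by (simp add: abs_mult)
    also have "\<dots> \<le> rj j * 1" using rj_pos[of j] by (intro mult_left_mono) auto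
    finally have "sj j * \<bar>cos (sj j)\<bar> \<le> rj j" by simp
    moreover have "\<bar>cos (sj j)\<bar> \<le> sj j * \<bar>cos (sj j)\<bar>" using s1 by (simp add: mult_le_cancel_right1)
    ultimately show "norm (cos (sj j)) \<le> rj j" by simp
  qed
qed

lemma sj_lim: "sj \<longlonglongrightarrow> pi / 2"
proof -
  have "(\<lambda>j. arccos (cos (sj j))) \<longlonglongrightarrow> arccos 0"
    by (rule isCont_tendsto_compose[OF isCont_arccos cos_lim]) auto
  moreover have "arccos (cos (sj j)) = sj j" for j
    using sj(1)[of j] sj(2)[of j] pi_gt_zero by (intro arccos_cos) linarith+
  ultimately show ?thesis by simp
qed

theorem theorem2:
  shows "\<exists>(lam :: nat \<Rightarrow> real) (u :: nat \<Rightarrow> real \<Rightarrow> real).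
     lam \<longlonglongrightarrow> pi\<^sup>2 / 4 \<and>
     (\<forall>j. H2 0 3 (u j) \<and> H10 0 3 (u j) \<and>
          weak_sol 0 3 (indicator {1<..<2}) (indicator {2<..<3}) (lam j) (u j)) \<and>
     ((\<lambda>j. Linf_norm 0 3 (u j)) \<longlongrightarrow> \<infinity>) sequentially"
proof (intro exI conjI allI)
  show "(\<lambda>j. (sj j)\<^sup>2) \<longlonglongrightarrow> pi\<^sup>2 / 4"
    using tendsto_power[OF sj_lim, of 2] by (simp add: power_divide)
  fix j
  show "H2 0 3 (sol.uu (aj j) (sj j) (Bj j))" by (rule sol.H2_uu[OF sol_j])
  show "H10 0 3 (sol.uu (aj j) (sj j) (Bj j))" by (rule sol.H10_uu[OF sol_j])
  show "weak_sol 0 3 (indicator {1<..<2}) (indicator {2<..<3}) ((sj j)\<^sup>2) (sol.uu (aj j) (sj j) (Bj j))"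
    by (rule sol.ws[OF sol_j])
next
  show "((\<lambda>j. Linf_norm 0 3 (sol.uu (aj j) (sj j) (Bj j))) \<longlongrightarrow> \<infinity>) sequentially"
    unfolding tendsto_PInfty
  proof
    fix r :: real
    have "\<forall>\<^sub>F j in sequentially. r < aj j"
      using eventually_ge_at_top[of "nat \<lceil>r\<rceil>"]
    proof eventually_elim
      case (elim j)
      have "r \<le> real (nat \<lceil>r\<rceil>)" by (rule real_nat_ceiling_ge)
      also have "\<dots> \<le> real j" using elim by simp
      finally show ?case by (simp add: aj_def)
    qed
    then show "\<forall>\<^sub>F j in sequentially. ereal r < Linf_norm 0 3 (sol.uu (aj j) (sj j) (Bj j))"
    proof eventually_elim
      case (elim j)
      then have "ereal r < ereal (aj j)" by simp
      also have "\<dots> \<le> Linf_norm 0 3 (sol.uu (aj j) (sj j) (Bj j))" by (rule sol.Linf_norm_ge[OF sol_j])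
      finally show ?case .
    qed
  qed
qed


end
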